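(* Let $M$ be a timelike surface in $\mathbb{R}^{n,1}$ with a canonical null direction with respect to a constant unit spacelike vector $Z$, with $W$ and $a$ as below. Then the Gaussian curvature of $M$ is $K=Z^{\top}(a)$.
   Context: $\mathbb{R}^{n,1}$ is $\mathbb{R}^{n+1}$ with the metric $-dx_1^2+dx_2^2+\dots+dx_{n+1}^2$. A surface is timelike if the induced metric has signature $(1,1)$; a vector $v$ is lightlike if $v\ne0$ and $\langle v,v\rangle=0$. For a constant vector $Z$, $Z=Z^\top+Z^\perp$ along $M$; $M$ has a canonical null direction with respect to $Z$ if $Z^\top$ is lightlike everywhere on $M$. $W$ is the unique lightlike tangent field with $\langle Z^\top,W\rangle=-1$, and $a:=\langle II(W,W),Z^\perp\rangle$, $II$ the second fundamental form. $K$ is the (sectional) Gaussian curvature of the induced Lorentzian metric. *)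

theory Defs
  imports "HOL-Analysis.Analysis"
begin

text \<open>Minkowski space R^{n,1}: vectors are real^'m with CARD('m) = n+1, and a
  distinguished index t0 carrying the timelike coordinate (metric -dx_t0^2 + sum of others).\<close>

definition mink :: "'m::finite \<Rightarrow> real^'m \<Rightarrow> real^'m \<Rightarrow> real" where
  "mink t0 x y = - (x$t0 * y$t0) + (\<Sum>i\<in>UNIV - {t0}. x$i * y$i)"

definition pd :: "nat \<Rightarrow> (real \<times> real \<Rightarrow> 'a::real_normed_vector) \<Rightarrow> real \<times> real \<Rightarrow> 'a" where
  "pd i F p = (if i = 0 then vector_derivative (\<lambda>s. F (s, snd p)) (at (fst p))
                        else vector_derivative (\<lambda>t. F (fst p, t)) (at (snd p)))"

definition pdiffble :: "nat \<Rightarrow> (real \<times> real \<Rightarrow> 'a::real_normed_vector) \<Rightarrow> real \<times> real \<Rightarrow> bool" where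
  "pdiffble i F p = (if i = 0 then (\<lambda>s. F (s, snd p)) differentiable (at (fst p))
                             else (\<lambda>t. F (fst p, t)) differentiable (at (snd p)))"

fun Ck :: "nat \<Rightarrow> (real \<times> real \<Rightarrow> 'a::real_normed_vector) \<Rightarrow> (real \<times> real) set \<Rightarrow> bool" where
  "Ck 0 F U = continuous_on U F"
| "Ck (Suc k) F U = (continuous_on U F \<and> (\<forall>i<2. \<forall>p\<in>U. pdiffble i F p)
                      \<and> (\<forall>i<2. Ck k (pd i F) U))"

definition smooth2 :: "(real \<times> real \<Rightarrow> 'a::real_normed_vector) \<Rightarrow> (real \<times> real) set \<Rightarrow> bool" where
  "smooth2 F U = (\<forall>k. Ck k F U)"

definition gm :: "'m::finite \<Rightarrow> (real \<times> real \<Rightarrow> real^'m) \<Rightarrow> nat \<Rightarrow> nat \<Rightarrow> real \<times> real \<Rightarrow> real" where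
  "gm t0 X i j p = mink t0 (pd i X p) (pd j X p)"

definition gdet :: "'m::finite \<Rightarrow> (real \<times> real \<Rightarrow> real^'m) \<Rightarrow> real \<times> real \<Rightarrow> real" where
  "gdet t0 X p = gm t0 X 0 0 p * gm t0 X 1 1 p - gm t0 X 0 1 p * gm t0 X 1 0 p"

definition ginv :: "'m::finite \<Rightarrow> (real \<times> real \<Rightarrow> real^'m) \<Rightarrow> nat \<Rightarrow> nat \<Rightarrow> real \<times> real \<Rightarrow> real" where
  "ginv t0 X i j p =
     (if i = 0 \<and> j = 0 then gm t0 X 1 1 p / gdet t0 X p
      else if i = 1 \<and> j = 1 then gm t0 X 0 0 p / gdet t0 X p
      else - gm t0 X i j p / gdet t0 X p)"

text \<open>Timelike immersion: induced metric has signature (1,1), i.e. det g < 0.\<close>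

definition timelike_surface :: "'m::finite \<Rightarrow> (real \<times> real \<Rightarrow> real^'m) \<Rightarrow> (real \<times> real) set \<Rightarrow> bool" where
  "timelike_surface t0 X U = (open U \<and> smooth2 X U \<and> (\<forall>p\<in>U. gdet t0 X p < 0))"

text \<open>Christoffel symbols Gamma^k_ij, Riemann tensor R(d_i,d_j)d_k = R^l_ijk d_l with
  R(X,Y)Z = nabla_X nabla_Y Z - nabla_Y nabla_X Z - nabla_[X,Y] Z, and the sectional
  (Gaussian) curvature K = <R(d_0,d_1)d_1, d_0> / (g_00 g_11 - g_01^2).\<close>

definition christoffel :: "'m::finite \<Rightarrow> (real \<times> real \<Rightarrow> real^'m) \<Rightarrow> nat \<Rightarrow> nat \<Rightarrow> nat \<Rightarrow> real \<times> real \<Rightarrow> real" where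
  "christoffel t0 X k i j p = (1/2) * (\<Sum>l<2. ginv t0 X k l p *
      (pd i (gm t0 X j l) p + pd j (gm t0 X i l) p - pd l (gm t0 X i j) p))"

definition riemann :: "'m::finite \<Rightarrow> (real \<times> real \<Rightarrow> real^'m) \<Rightarrow> nat \<Rightarrow> nat \<Rightarrow> nat \<Rightarrow> nat \<Rightarrow> real \<times> real \<Rightarrow> real" where
  "riemann t0 X l i j k p =
     pd i (christoffel t0 X l j k) p - pd j (christoffel t0 X l i k) p
     + (\<Sum>m<2. christoffel t0 X l i m p * christoffel t0 X m j k p
              - christoffel t0 X l j m p * christoffel t0 X m i k p)"

definition gauss_curv :: "'m::finite \<Rightarrow> (real \<times> real \<Rightarrow> real^'m) \<Rightarrow> real \<times> real \<Rightarrow> real" where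
  "gauss_curv t0 X p = (\<Sum>l<2. riemann t0 X l 0 1 1 p * gm t0 X l 0 p) / gdet t0 X p"

definition tcoef :: "'m::finite \<Rightarrow> (real \<times> real \<Rightarrow> real^'m) \<Rightarrow> real^'m \<Rightarrow> nat \<Rightarrow> real \<times> real \<Rightarrow> real" where
  "tcoef t0 X v i p = (\<Sum>j<2. ginv t0 X i j p * mink t0 v (pd j X p))"

definition tanpart :: "'m::finite \<Rightarrow> (real \<times> real \<Rightarrow> real^'m) \<Rightarrow> real^'m \<Rightarrow> real \<times> real \<Rightarrow> real^'m" where
  "tanpart t0 X v p = (\<Sum>i<2. tcoef t0 X v i p *\<^sub>R pd i X p)"

definition norpart :: "'m::finite \<Rightarrow> (real \<times> real \<Rightarrow> real^'m) \<Rightarrow> real^'m \<Rightarrow> real \<times> real \<Rightarrow> real^'m" where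
  "norpart t0 X v p = v - tanpart t0 X v p"

text \<open>Second fundamental form II(d_i,d_j) = (X_ij)^perp, extended bilinearly:
  II(V,V') for V = sum v_i X_i, V' = sum v'_j X_j.\<close>

definition sff :: "'m::finite \<Rightarrow> (real \<times> real \<Rightarrow> real^'m) \<Rightarrow> (nat \<Rightarrow> real) \<Rightarrow> (nat \<Rightarrow> real) \<Rightarrow> real \<times> real \<Rightarrow> real^'m" where
  "sff t0 X v v' p = (\<Sum>i<2. \<Sum>j<2. (v i * v' j) *\<^sub>R norpart t0 X (pd i (pd j X) p) p)"

definition tvec :: "(real \<times> real \<Rightarrow> real^'m) \<Rightarrow> (nat \<Rightarrow> real \<times> real \<Rightarrow> real) \<Rightarrow> real \<times> real \<Rightarrow> real^'m" where
  "tvec X w p = (\<Sum>i<2. w i p *\<^sub>R pd i X p)"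

definition dir_deriv :: "(nat \<Rightarrow> real \<times> real \<Rightarrow> real) \<Rightarrow> (real \<times> real \<Rightarrow> real) \<Rightarrow> real \<times> real \<Rightarrow> real" where
  "dir_deriv c f p = (\<Sum>i<2. c i p * pd i f p)"

end

theory Submission
  imports Defs
begin


definition lp :: "nat \<Rightarrow> real \<times> real \<Rightarrow> real \<Rightarrow> real \<times> real" where
  "lp i p s = (if i = 0 then (s, snd p) else (fst p, s))"
definition pc :: "nat \<Rightarrow> real \<times> real \<Rightarrow> real" where
  "pc i p = (if i = 0 then fst p else snd p)"

definition hpd :: "nat \<Rightarrow> (real \<times> real \<Rightarrow> 'a::real_normed_vector) \<Rightarrow> 'a \<Rightarrow> real \<times> real \<Rightarrow> bool" where
  "hpd i F D p = (((\<lambda>s. F (lp i p s)) has_vector_derivative D) (at (pc i p)))"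

lemma pd_alt: "pd i F p = vector_derivative (\<lambda>s. F (lp i p s)) (at (pc i p))"
  by (simp add: pd_def lp_def pc_def)

lemma pdiffble_alt: "pdiffble i F p = ((\<lambda>s. F (lp i p s)) differentiable (at (pc i p)))"
  by (simp add: pdiffble_def lp_def pc_def)

lemma lp_pc[simp]: "lp i p (pc i p) = p"
  by (simp add: lp_def pc_def)

lemma continuous_lp: "continuous_on UNIV (lp i p)"
  unfolding lp_def by (cases "i = 0") (auto intro!: continuous_intros)

lemma pdiffble_hpd: "pdiffble i F p \<Longrightarrow> hpd i F (pd i F p) p"
  unfolding pdiffble_alt hpd_def pd_alt by (rule vector_derivative_works[THEN iffD1])

lemma hpd_pd: "hpd i F D p \<Longrightarrow> pd i F p = D"
  unfolding hpd_def pd_alt by (rule vector_derivative_at)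

lemma hpd_pdiffble: "hpd i F D p \<Longrightarrow> pdiffble i F p"
  unfolding hpd_def pdiffble_alt by (auto simp: differentiable_def has_vector_derivative_def)

lemma hpd_local:
  assumes "hpd i F D p" "open U" "p \<in> U" "\<And>q. q \<in> U \<Longrightarrow> F q = G q"
  shows "hpd i G D p"
proof -
  have o: "open {s. lp i p s \<in> U}"
    using open_vimage[OF assms(2) continuous_lp[of i p]] by (simp add: vimage_def)
  show ?thesis using assms(1) unfolding hpd_def
    by (rule has_vector_derivative_transform_within_open[OF _ o]) (use assms in auto)
qed

lemma pd_local:
  assumes "pdiffble i F p" "open U" "p \<in> U" "\<And>q. q \<in> U \<Longrightarrow> F q = G q"
  shows "pd i G p = pd i F p" "pdiffble i G p"
  using hpd_local[OF pdiffble_hpd[OF assms(1)] assms(2-4)]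
  by (auto intro: hpd_pd hpd_pdiffble)

lemma hpd_const: "hpd i (\<lambda>q. c) 0 p"
  unfolding hpd_def by simp

lemma hpd_add: "hpd i F D p \<Longrightarrow> hpd i G E p \<Longrightarrow> hpd i (\<lambda>q. F q + G q) (D + E) p"
  unfolding hpd_def by (rule has_vector_derivative_add)

lemma hpd_diff: "hpd i F D p \<Longrightarrow> hpd i G E p \<Longrightarrow> hpd i (\<lambda>q. F q - G q) (D - E) p"
  unfolding hpd_def by (rule has_vector_derivative_diff)

lemma hpd_minus: "hpd i F D p \<Longrightarrow> hpd i (\<lambda>q. - F q) (- D) p"
  unfolding hpd_def by (rule has_vector_derivative_minus)

lemma hpd_sum: "(\<And>k. k \<in> I \<Longrightarrow> hpd i (F k) (D k) p) \<Longrightarrow> hpd i (\<lambda>q. \<Sum>k\<in>I. F k q) (\<Sum>k\<in>I. D k) p"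
  unfolding hpd_def by (rule has_vector_derivative_sum)

lemma hpd_mult: "hpd i (F::_\<Rightarrow>real) D p \<Longrightarrow> hpd i G E p \<Longrightarrow> hpd i (\<lambda>q. F q * G q) (D * G p + F p * E) p"
  unfolding hpd_def
  by (drule (1) has_vector_derivative_mult) (simp add: algebra_simps)

lemma hpd_scaleR: "hpd i (F::_\<Rightarrow>real) D p \<Longrightarrow> hpd i G E p \<Longrightarrow> hpd i (\<lambda>q. F q *\<^sub>R G q) (D *\<^sub>R G p + F p *\<^sub>R E) p"
  unfolding hpd_def
  by (drule has_vector_derivative_scaleR[unfolded has_real_derivative_iff_has_vector_derivative[symmetric], rotated])
     (auto simp: has_real_derivative_iff_has_vector_derivative algebra_simps)

lemma hpd_divide: "hpd i (F::_\<Rightarrow>real) D p \<Longrightarrow> hpd i G E p \<Longrightarrow> G p \<noteq> 0 \<Longrightarrow>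
   hpd i (\<lambda>q. F q / G q) ((D * G p - F p * E) / (G p * G p)) p"
  unfolding hpd_def has_real_derivative_iff_has_vector_derivative[symmetric]
  by (drule (1) DERIV_divide) (auto simp: power2_eq_square)


lemma mink_sym: "mink t0 x y = mink t0 y x"
  unfolding mink_def by (simp add: mult.commute)

lemma mink_add_left: "mink t0 (x + y) z = mink t0 x z + mink t0 y z"
  unfolding mink_def by (simp add: algebra_simps sum.distrib)
lemma mink_add_right: "mink t0 z (x + y) = mink t0 z x + mink t0 z y"
  unfolding mink_def by (simp add: algebra_simps sum.distrib)
lemma mink_scaleR_left: "mink t0 (c *\<^sub>R x) z = c * mink t0 x z"
  unfolding mink_def by (simp add: algebra_simps sum_distrib_left)
lemma mink_scaleR_right: "mink t0 z (c *\<^sub>R x) = c * mink t0 z x"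
  unfolding mink_def by (simp add: algebra_simps sum_distrib_left)
lemma mink_diff_left: "mink t0 (x - y) z = mink t0 x z - mink t0 y z"
  unfolding mink_def by (simp add: algebra_simps sum_subtractf)
lemma mink_diff_right: "mink t0 z (x - y) = mink t0 z x - mink t0 z y"
  unfolding mink_def by (simp add: algebra_simps sum_subtractf)
lemma mink_zero_left[simp]: "mink t0 0 z = 0" unfolding mink_def by simp
lemma mink_zero_right[simp]: "mink t0 z 0 = 0" unfolding mink_def by simp
lemma mink_sum_left: "mink t0 (\<Sum>k\<in>I. f k) z = (\<Sum>k\<in>I. mink t0 (f k) z)"
  by (induction I rule: infinite_finite_induct) (auto simp: mink_add_left)
lemma mink_sum_right: "mink t0 z (\<Sum>k\<in>I. f k) = (\<Sum>k\<in>I. mink t0 z (f k))"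
  by (induction I rule: infinite_finite_induct) (auto simp: mink_add_right)

lemmas mink_lin = mink_add_left mink_add_right mink_scaleR_left mink_scaleR_right
  mink_diff_left mink_diff_right mink_sum_left mink_sum_right

lemma bb_mink: "bounded_bilinear (mink t0)"
proof -
  have "bilinear (mink t0)"
    unfolding bilinear_def
    by (auto intro!: linearI simp: mink_lin)
  thus ?thesis by (simp add: bilinear_conv_bounded_bilinear)
qed

lemma hpd_mink: "hpd i F D p \<Longrightarrow> hpd i G E p \<Longrightarrow>
   hpd i (\<lambda>q. mink t0 (F q) (G q)) (mink t0 D (G p) + mink t0 (F p) E) p"
  unfolding hpd_def
  by (drule (1) bounded_bilinear.has_vector_derivative[OF bb_mink]) (simp add: add.commute)

lemma hpd_component: "hpd i F D p \<Longrightarrow> hpd i (\<lambda>q. F q $ k) (D $ k) p"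
  unfolding hpd_def
  by (rule bounded_linear.has_vector_derivative[OF bounded_linear_vec_nth])

lemma smooth2_pd: "smooth2 F U \<Longrightarrow> i < 2 \<Longrightarrow> smooth2 (pd i F) U"
  unfolding smooth2_def
  by (metis Ck.simps(2))

lemma smooth2_pdiffble: "smooth2 F U \<Longrightarrow> i < 2 \<Longrightarrow> p \<in> U \<Longrightarrow> pdiffble i F p"
  unfolding smooth2_def by (metis Ck.simps(2))

lemma smooth2_cont: "smooth2 F U \<Longrightarrow> continuous_on U F"
  unfolding smooth2_def by (metis Ck.simps(1))


lemma hpd0: "hpd 0 F D q = (((\<lambda>s. F (s, snd q)) has_vector_derivative D) (at (fst q)))"
  by (simp add: hpd_def lp_def pc_def)
lemma hpd1: "hpd (Suc 0) F D q = (((\<lambda>t. F (fst q, t)) has_vector_derivative D) (at (snd q)))"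
  by (simp add: hpd_def lp_def pc_def)

lemma sq_small: fixes a b d :: real
  assumes "0 \<le> a" "a \<le> d/2" "0 \<le> b" "b \<le> d/2" "d > 0"
  shows "sqrt (a\<^sup>2 + b\<^sup>2) < d"
proof -
  have "a\<^sup>2 \<le> (d/2)\<^sup>2" "b\<^sup>2 \<le> (d/2)\<^sup>2" using assms by (auto intro: power_mono)
  moreover have "0 < d*d" using assms by simp
  ultimately have "a\<^sup>2 + b\<^sup>2 < d\<^sup>2" by (simp add: power2_eq_square field_simps)
  hence "sqrt (a\<^sup>2 + b\<^sup>2) < sqrt (d\<^sup>2)" by (rule real_sqrt_less_mono)
  thus ?thesis using assms by simp
qed

lemma schwarz_real:
  fixes F Fu Fv Fuv Fvu :: "real \<times> real \<Rightarrow> real"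
  assumes U: "open U" "p \<in> U"
    and h0: "\<And>q. q \<in> U \<Longrightarrow> hpd 0 F (Fu q) q"
    and h1: "\<And>q. q \<in> U \<Longrightarrow> hpd 1 F (Fv q) q"
    and h01: "\<And>q. q \<in> U \<Longrightarrow> hpd 1 Fu (Fuv q) q"
    and h10: "\<And>q. q \<in> U \<Longrightarrow> hpd 0 Fv (Fvu q) q"
    and c01: "continuous_on U Fuv" and c10: "continuous_on U Fvu"
  shows "Fuv p = Fvu p"
proof (rule ccontr)
  assume ne: "Fuv p \<noteq> Fvu p"
  define e where "e = \<bar>Fuv p - Fvu p\<bar>"
  have e: "e > 0" using ne by (simp add: e_def)
  obtain u v where p: "p = (u, v)" by (cases p)
  obtain d0 where d0: "d0 > 0" "ball p d0 \<subseteq> U" using U openE by blast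
  have "isCont Fuv p" using c01 U continuous_on_eq_continuous_at by blast
  then obtain d1 where d1: "d1 > 0" "\<And>y. dist y p < d1 \<Longrightarrow> dist (Fuv y) (Fuv p) < e/2"
    unfolding continuous_at_eps_delta using e by (meson half_gt_zero)
  have "isCont Fvu p" using c10 U continuous_on_eq_continuous_at by blast
  then obtain d2 where d2: "d2 > 0" "\<And>y. dist y p < d2 \<Longrightarrow> dist (Fvu y) (Fvu p) < e/2"
    unfolding continuous_at_eps_delta using e by (meson half_gt_zero)
  define d where "d = min d0 (min d1 d2)"
  have d: "d > 0" using d0 d1 d2 by (simp add: d_def)
  define h where "h = d/2"
  have h: "h > 0" using d by (simp add: h_def)
  have box: "dist (s, t) p < d" if "u \<le> s" "s \<le> u + h" "v \<le> t" "t \<le> v + h" for s t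
  proof -
    have "dist (s, t) p = sqrt ((s - u)\<^sup>2 + (t - v)\<^sup>2)"
      by (simp add: p dist_Pair_Pair dist_real_def)
    also have "\<dots> < d" using that d by (intro sq_small) (auto simp: h_def)
    finally show ?thesis .
  qed
  have inU: "(s, t) \<in> U" if "u \<le> s" "s \<le> u + h" "v \<le> t" "t \<le> v + h" for s t
    using box[OF that] d0 by (auto simp: d_def dist_commute subset_eq)
  define \<Delta> where "\<Delta> = F (u+h, v+h) - F (u+h, v) - F (u, v+h) + F (u, v)"
  have "\<exists>z. u < z \<and> z < u + h \<and>
     (F (u+h, v+h) - F (u+h, v)) - (F (u, v+h) - F (u, v)) = ((u+h) - u) * (Fu (z, v+h) - Fu (z, v))"
  proof (rule MVT2[of u "u+h" "\<lambda>s. F (s, v+h) - F (s, v)"])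
    show "u < u + h" using h by simp
    fix x assume x: "u \<le> x" "x \<le> u + h"
    have a: "hpd 0 F (Fu (x, v+h)) (x, v+h)" using h0 inU x h by auto
    have b: "hpd 0 F (Fu (x, v)) (x, v)" using h0 inU x h by auto
    show "((\<lambda>s. F (s, v + h) - F (s, v)) has_real_derivative Fu (x, v + h) - Fu (x, v)) (at x)"
      using a b unfolding hpd0 has_real_derivative_iff_has_vector_derivative
      by (auto intro!: has_vector_derivative_diff)
  qed
  then obtain \<xi> where xi: "u < \<xi>" "\<xi> < u + h" "\<Delta> = h * (Fu (\<xi>, v+h) - Fu (\<xi>, v))"
    by (auto simp: \<Delta>_def algebra_simps)
  have "\<exists>z. v < z \<and> z < v + h \<and> Fu (\<xi>, v+h) - Fu (\<xi>, v) = ((v+h) - v) * Fuv (\<xi>, z)"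
  proof (rule MVT2[of v "v+h" "\<lambda>t. Fu (\<xi>, t)"])
    show "v < v + h" using h by simp
    fix x assume x: "v \<le> x" "x \<le> v + h"
    have a: "hpd 1 Fu (Fuv (\<xi>, x)) (\<xi>, x)" using h01 inU x xi by auto
    thus "((\<lambda>t. Fu (\<xi>, t)) has_real_derivative Fuv (\<xi>, x)) (at x)"
      unfolding One_nat_def hpd1 has_real_derivative_iff_has_vector_derivative by simp
  qed
  then obtain \<eta> where eta: "v < \<eta>" "\<eta> < v + h" "Fu (\<xi>, v+h) - Fu (\<xi>, v) = h * Fuv (\<xi>, \<eta>)"
    by auto
  have "\<exists>z. v < z \<and> z < v + h \<and>
     (F (u+h, v+h) - F (u, v+h)) - (F (u+h, v) - F (u, v)) = ((v+h) - v) * (Fv (u+h, z) - Fv (u, z))"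
  proof (rule MVT2[of v "v+h" "\<lambda>t. F (u+h, t) - F (u, t)"])
    show "v < v + h" using h by simp
    fix x assume x: "v \<le> x" "x \<le> v + h"
    have a: "hpd 1 F (Fv (u+h, x)) (u+h, x)" using h1 inU x h by auto
    have b: "hpd 1 F (Fv (u, x)) (u, x)" using h1 inU x h by auto
    show "((\<lambda>t. F (u+h, t) - F (u, t)) has_real_derivative Fv (u+h, x) - Fv (u, x)) (at x)"
      using a b unfolding One_nat_def hpd1 has_real_derivative_iff_has_vector_derivative
      by (auto intro!: has_vector_derivative_diff)
  qed
  then obtain \<eta>' where eta': "v < \<eta>'" "\<eta>' < v + h" "\<Delta> = h * (Fv (u+h, \<eta>') - Fv (u, \<eta>'))"
    by (auto simp: \<Delta>_def algebra_simps)
  have "\<exists>z. u < z \<and> z < u + h \<and> Fv (u+h, \<eta>') - Fv (u, \<eta>') = ((u+h) - u) * Fvu (z, \<eta>')"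
  proof (rule MVT2[of u "u+h" "\<lambda>s. Fv (s, \<eta>')"])
    show "u < u + h" using h by simp
    fix x assume x: "u \<le> x" "x \<le> u + h"
    have a: "hpd 0 Fv (Fvu (x, \<eta>')) (x, \<eta>')" using h10 inU x eta' by auto
    thus "((\<lambda>s. Fv (s, \<eta>')) has_real_derivative Fvu (x, \<eta>')) (at x)"
      unfolding hpd0 has_real_derivative_iff_has_vector_derivative by simp
  qed
  then obtain \<xi>' where xi': "u < \<xi>'" "\<xi>' < u + h" "Fv (u+h, \<eta>') - Fv (u, \<eta>') = h * Fvu (\<xi>', \<eta>')"
    by auto
  have "\<Delta> = (h * h) * Fuv (\<xi>, \<eta>)" using xi(3) eta(3) by simp
  moreover have "\<Delta> = (h * h) * Fvu (\<xi>', \<eta>')" using eta'(3) xi'(3) by simp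
  ultimately have "(h * h) * Fuv (\<xi>, \<eta>) = (h * h) * Fvu (\<xi>', \<eta>')" by (metis (no_types))
  hence eq: "Fuv (\<xi>, \<eta>) = Fvu (\<xi>', \<eta>')" using h by simp
  have "dist (\<xi>, \<eta>) p < d1" using box[of \<xi> \<eta>] xi eta by (auto simp: d_def)
  hence A: "dist (Fuv (\<xi>, \<eta>)) (Fuv p) < e/2" by (rule d1(2))
  have "dist (\<xi>', \<eta>') p < d2" using box[of \<xi>' \<eta>'] xi' eta' by (auto simp: d_def)
  hence B: "dist (Fvu (\<xi>', \<eta>')) (Fvu p) < e/2" by (rule d2(2))
  have "e < e" using A B eq unfolding e_def dist_real_def by (simp add: abs_if split: if_splits)
  thus False by simp
qed


lemma schwarz_vec:
  fixes F :: "real \<times> real \<Rightarrow> real^'m"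
  assumes "open U" "p \<in> U" "smooth2 F U"
  shows "pd 1 (pd 0 F) p = pd 0 (pd 1 F) p"
proof -
  have s0: "smooth2 (pd 0 F) U" and s1: "smooth2 (pd 1 F) U" using smooth2_pd[OF assms(3)] by auto
  have s01: "smooth2 (pd 1 (pd 0 F)) U" and s10: "smooth2 (pd 0 (pd 1 F)) U"
    using smooth2_pd[OF s0] smooth2_pd[OF s1] by auto
  show ?thesis
  proof (rule vec_eq_iff[THEN iffD2], rule allI)
    fix k
    show "pd 1 (pd 0 F) p $ k = pd 0 (pd 1 F) p $ k"
    proof (rule schwarz_real[OF assms(1,2), where F="\<lambda>q. F q $ k" and Fu="\<lambda>q. pd 0 F q $ k"
          and Fv="\<lambda>q. pd 1 F q $ k"])
      fix q assume q: "q \<in> U"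
      show "hpd 0 (\<lambda>q. F q $ k) (pd 0 F q $ k) q"
        by (rule hpd_component, rule pdiffble_hpd, rule smooth2_pdiffble[OF assms(3)]) (use q in auto)
      show "hpd 1 (\<lambda>q. F q $ k) (pd 1 F q $ k) q"
        by (rule hpd_component, rule pdiffble_hpd, rule smooth2_pdiffble[OF assms(3)]) (use q in auto)
      show "hpd 1 (\<lambda>q. pd 0 F q $ k) (pd 1 (pd 0 F) q $ k) q"
        by (rule hpd_component, rule pdiffble_hpd, rule smooth2_pdiffble[OF s0]) (use q in auto)
      show "hpd 0 (\<lambda>q. pd 1 F q $ k) (pd 0 (pd 1 F) q $ k) q"
        by (rule hpd_component, rule pdiffble_hpd, rule smooth2_pdiffble[OF s1]) (use q in auto)
    next
      show "continuous_on U (\<lambda>q. pd 1 (pd 0 F) q $ k)"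
        using smooth2_cont[OF s01] by (intro continuous_intros)
      show "continuous_on U (\<lambda>q. pd 0 (pd 1 F) q $ k)"
        using smooth2_cont[OF s10] by (intro continuous_intros)
    qed
  qed
qed

lemma pd_sym:
  fixes F :: "real \<times> real \<Rightarrow> real^'m"
  assumes "open U" "p \<in> U" "smooth2 F U" "i < 2" "j < 2"
  shows "pd i (pd j F) p = pd j (pd i F) p"
  using assms schwarz_vec[OF assms(1-3)]
  by (cases i; cases j) (auto simp: less_Suc_eq)


lemma sum2: "(\<Sum>l<2. f l) = f 0 + f (1::nat)"
  by (simp add: numeral_2_eq_2)

lemma ricci_alg:
  fixes z ad :: "nat \<Rightarrow> real" and a :: real and zz :: "nat \<Rightarrow> nat \<Rightarrow> real"
    and zzz G :: "nat \<Rightarrow> nat \<Rightarrow> nat \<Rightarrow> real" and D :: "nat \<Rightarrow> nat \<Rightarrow> nat \<Rightarrow> nat \<Rightarrow> real"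
  assumes i: "i < 2" and zzz1: "zzz 0 1 i = zzz 1 0 i"
    and Gs: "\<And>m i j. m < 2 \<Longrightarrow> i < 2 \<Longrightarrow> j < 2 \<Longrightarrow> G m i j = G m j i"
    and H: "\<And>i j. i < 2 \<Longrightarrow> j < 2 \<Longrightarrow> zz i j = a * z i * z j + (\<Sum>m<2. G m i j * z m)"
    and A: "\<And>k i j. k < 2 \<Longrightarrow> i < 2 \<Longrightarrow> j < 2 \<Longrightarrow> (\<Sum>m<2. D k m i j * z m) = zzz k i j - (\<Sum>m<2. G m i j * zz k m)
               - (ad k * z i * z j + a * (zz k i * z j + z i * zz k j))"
  shows "(\<Sum>n<2. z n * (D 0 n 1 i - D 1 n 0 i + (\<Sum>m<2. G n 0 m * G m 1 i - G n 1 m * G m 0 i)))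
         = z i * (ad 1 * z 0 - ad 0 * z 1)"
proof -
  have e: "(\<Sum>n<2. z n * (D 0 n 1 i - D 1 n 0 i + (\<Sum>m<2. G n 0 m * G m 1 i - G n 1 m * G m 0 i)))
     = (\<Sum>m<2. D 0 m 1 i * z m) - (\<Sum>m<2. D 1 m 0 i * z m)
       + (\<Sum>n<2. z n * (\<Sum>m<2. G n 0 m * G m 1 i - G n 1 m * G m 0 i))"
    by (simp add: sum2 algebra_simps)
  have A0: "(\<Sum>m<2. D 0 m 1 i * z m) = zzz 0 1 i - (\<Sum>m<2. G m 1 i * zz 0 m)
               - (ad 0 * z 1 * z i + a * (zz 0 1 * z i + z 1 * zz 0 i))" using A[of 0 1 i] i by simp
  have A1: "(\<Sum>m<2. D 1 m 0 i * z m) = zzz 1 0 i - (\<Sum>m<2. G m 0 i * zz 1 m)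
               - (ad 1 * z 0 * z i + a * (zz 1 0 * z i + z 0 * zz 1 i))" using A[of 1 0 i] i by simp
  have Hs: "\<And>i j. i < 2 \<Longrightarrow> j < 2 \<Longrightarrow> zz i j = a * z i * z j + (G 0 i j * z 0 + G 1 i j * z 1)"
    using H by (simp add: sum2)
  show ?thesis unfolding e A0 A1
    using zzz1 Gs i
    by (auto simp: sum2 Hs algebra_simps less_Suc_eq numeral_2_eq_2)
qed


lemma antisym_alg:
  fixes g gi :: "nat \<Rightarrow> nat \<Rightarrow> real" and P :: "nat \<Rightarrow> nat \<Rightarrow> nat \<Rightarrow> real"
    and Q T :: "nat \<Rightarrow> nat \<Rightarrow> nat \<Rightarrow> nat \<Rightarrow> real"
    and G :: "nat \<Rightarrow> nat \<Rightarrow> nat \<Rightarrow> real" and D :: "nat \<Rightarrow> nat \<Rightarrow> nat \<Rightarrow> nat \<Rightarrow> real"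
    and pp :: "nat \<Rightarrow> nat \<Rightarrow> real" and qq tt :: "nat \<Rightarrow> nat \<Rightarrow> real"
  assumes gis: "gi 0 1 = gi 1 0"
    and Pd: "\<And>i j l. i < 2 \<Longrightarrow> j < 2 \<Longrightarrow> P i j l = pp (i + j) l"
    and Qd: "\<And>i j k l. i < 2 \<Longrightarrow> j < 2 \<Longrightarrow> k < 2 \<Longrightarrow> l < 2 \<Longrightarrow> Q i j k l = qq (i + j) (k + l)" and qqs: "\<And>a b. qq a b = qq b a"
    and Td: "\<And>k i j n. k < 2 \<Longrightarrow> i < 2 \<Longrightarrow> j < 2 \<Longrightarrow> T k i j n = tt (k + i + j) n"
    and Gd: "\<And>l i j. l < 2 \<Longrightarrow> i < 2 \<Longrightarrow> j < 2 \<Longrightarrow> G l i j = (\<Sum>m<2. gi l m * P i j m)"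
    and GG: "\<And>n i j. n < 2 \<Longrightarrow> i < 2 \<Longrightarrow> j < 2 \<Longrightarrow> (\<Sum>l<2. g n l * G l i j) = P i j n"
    and DG: "\<And>k n i j. k < 2 \<Longrightarrow> n < 2 \<Longrightarrow> i < 2 \<Longrightarrow> j < 2 \<Longrightarrow> (\<Sum>l<2. g n l * D k l i j) = T k i j n + Q i j k n - (\<Sum>l<2. (P k n l + P k l n) * G l i j)"
    and n: "n < 2" and i: "i < 2"
  shows "(\<Sum>l<2. g n l * (D 0 l 1 i - D 1 l 0 i + (\<Sum>m<2. G l 0 m * G m 1 i - G l 1 m * G m 0 i)))
       = - (\<Sum>l<2. g i l * (D 0 l 1 n - D 1 l 0 n + (\<Sum>m<2. G l 0 m * G m 1 n - G l 1 m * G m 0 n)))"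
proof -
  have e: "\<And>n i. (\<Sum>l<2. g n l * (D 0 l 1 i - D 1 l 0 i + (\<Sum>m<2. G l 0 m * G m 1 i - G l 1 m * G m 0 i)))
    = (\<Sum>l<2. g n l * D 0 l 1 i) - (\<Sum>l<2. g n l * D 1 l 0 i)
      + (\<Sum>m<2. (\<Sum>l<2. g n l * G l 0 m) * G m 1 i - (\<Sum>l<2. g n l * G l 1 m) * G m 0 i)"
    by (simp add: sum2 algebra_simps)
  have e2: "(\<Sum>l<2. g n l * (D 0 l 1 i - D 1 l 0 i + (\<Sum>m<2. G l 0 m * G m 1 i - G l 1 m * G m 0 i)))
    = (T 0 1 i n + Q 1 i 0 n - (\<Sum>l<2. (P 0 n l + P 0 l n) * G l 1 i))
      - (T 1 0 i n + Q 0 i 1 n - (\<Sum>l<2. (P 1 n l + P 1 l n) * G l 0 i))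
      + (\<Sum>m<2. P 0 m n * G m 1 i - P 1 m n * G m 0 i)" if n: "n < 2" and i: "i < 2" for n i
  proof -
    have s: "(\<Sum>m<2. (\<Sum>l<2. g n l * G l 0 m) * G m 1 i - (\<Sum>l<2. g n l * G l 1 m) * G m 0 i)
          = (\<Sum>m<2. P 0 m n * G m 1 i - P 1 m n * G m 0 i)"
      by (rule sum.cong) (auto simp: GG n)
    show ?thesis unfolding e s using DG[of 0 n 1 i] DG[of 1 n 0 i] n i by simp
  qed
  show ?thesis unfolding e2[OF n i] e2[OF i n]
    using n i by (auto simp: sum2 Gd Pd Qd Td less_Suc_eq numeral_2_eq_2 algebra_simps gis[simplified] qqs)
qed


lemma final_alg:
  fixes g00 g01 g11 z0 z1 S a0 a1 c0 c1 dt :: real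
  assumes dt: "dt = g00 * g11 - g01 * g01" "dt \<noteq> 0"
    and c0: "c0 = (g11 * z0 - g01 * z1) / dt" and c1: "c1 = (g00 * z1 - g01 * z0) / dt"
    and h1: "c0 * S = z1 * (a1 * z0 - a0 * z1)" and h2: "- (c1 * S) = z0 * (a1 * z0 - a0 * z1)"
    and nul: "g11 * z0 * z0 - 2 * g01 * z0 * z1 + g00 * z1 * z1 = 0"
    and z: "z0 \<noteq> 0 \<or> z1 \<noteq> 0"
  shows "S / dt = c0 * a0 + c1 * a1"
proof -
  define u where "u = g11 * z0 - g01 * z1"
  define v where "v = g00 * z1 - g01 * z0"
  have uu: "u * u = - dt * z1 * z1" unfolding u_def dt(1)
  proof -
    have "g11 * (g11 * z0 * z0 - 2 * g01 * z0 * z1 + g00 * z1 * z1) = 0" using nul by simp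
    thus "(g11 * z0 - g01 * z1) * (g11 * z0 - g01 * z1) = - (g00 * g11 - g01 * g01) * z1 * z1"
      by (simp add: algebra_simps power2_eq_square)
  qed
  have vv: "v * v = - dt * z0 * z0" unfolding v_def dt(1)
  proof -
    have "g00 * (g11 * z0 * z0 - 2 * g01 * z0 * z1 + g00 * z1 * z1) = 0" using nul by simp
    thus "(g00 * z1 - g01 * z0) * (g00 * z1 - g01 * z0) = - (g00 * g11 - g01 * g01) * z0 * z0"
      by (simp add: algebra_simps)
  qed
  have zuv: "z0 * u + z1 * v = 0" using nul unfolding u_def v_def by (simp add: algebra_simps)
  have cu: "u = c0 * dt" unfolding c0 u_def using dt by simp
  have cv: "v = c1 * dt" unfolding c1 v_def using dt by simp
  have H1: "u * S = dt * z1 * (a1 * z0 - a0 * z1)" unfolding cu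
    using arg_cong[OF h1, of "\<lambda>x. dt * x"] by (simp add: algebra_simps)
  have H2: "v * S = - dt * z0 * (a1 * z0 - a0 * z1)" unfolding cv
    using arg_cong[OF h2, of "\<lambda>x. dt * x"] by (simp add: algebra_simps)
  have goal: "S = a0 * u + a1 * v"
  proof (cases "z1 = 0")
    case False
    have "u * u \<noteq> 0" using uu dt False by simp
    hence un: "u \<noteq> 0" by simp
    have "u * (u * S) = u * (dt * z1 * (a1 * z0 - a0 * z1))" using H1 by simp
    have "u * u * S = u * u * (a0 * u + a1 * v)"
    proof -
      have A: "u * u * S = u * (dt * z1 * (a1 * z0 - a0 * z1))" using H1 by (simp add: mult.assoc)
      have B: "z1 * (u * u * (a0 * u + a1 * v)) = z1 * (u * (dt * z1 * (a1 * z0 - a0 * z1)))"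
      proof -
        have vz: "v * z1 = - (u * z0)" using zuv by (simp add: algebra_simps eq_neg_iff_add_eq_0)
        have "z1 * (u * u * (a0 * u + a1 * v)) = u * u * (a0 * u * z1 + a1 * (v * z1))" by (simp add: algebra_simps)
        also have "\<dots> = (u * u) * u * (a0 * z1 - a1 * z0)" unfolding vz by (simp add: algebra_simps)
        also have "\<dots> = z1 * (u * (dt * z1 * (a1 * z0 - a0 * z1)))" unfolding uu by (simp add: algebra_simps)
        finally show ?thesis .
      qed
      have "u * u * (a0 * u + a1 * v) = u * (dt * z1 * (a1 * z0 - a0 * z1))" using B False by simp
      thus ?thesis using A by metis
    qed
    thus ?thesis using un by (metis mult_cancel_left no_zero_divisors)
  next
    case True
    hence z0: "z0 \<noteq> 0" using z by simp
    have "v * v \<noteq> 0" using vv dt z0 by simp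
    hence vn: "v \<noteq> 0" by simp
    have "v * v * S = v * v * (a0 * u + a1 * v)"
    proof -
      have A: "v * v * S = v * (- dt * z0 * (a1 * z0 - a0 * z1))" using H2 by (simp add: mult.assoc)
      have B: "z0 * (v * v * (a0 * u + a1 * v)) = z0 * (v * (- dt * z0 * (a1 * z0 - a0 * z1)))"
      proof -
        have uz: "u * z0 = - (v * z1)" using zuv by (simp add: algebra_simps eq_neg_iff_add_eq_0)
        have "z0 * (v * v * (a0 * u + a1 * v)) = v * v * (a0 * (u * z0) + a1 * v * z0)" by (simp add: algebra_simps)
        also have "\<dots> = (v * v) * v * (a1 * z0 - a0 * z1)" unfolding uz by (simp add: algebra_simps)
        also have "\<dots> = z0 * (v * (- dt * z0 * (a1 * z0 - a0 * z1)))" unfolding vv by (simp add: algebra_simps)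
        finally show ?thesis .
      qed
      have "v * v * (a0 * u + a1 * v) = v * (- dt * z0 * (a1 * z0 - a0 * z1))" using B z0 by (metis minus_mult_right mult_cancel_left)
      thus ?thesis using A by metis
    qed
    thus ?thesis using vn by (metis mult_cancel_left no_zero_divisors)
  qed
  show ?thesis using goal dt(2) unfolding cu cv by (simp add: field_simps)
qed


lemma rank_alg:
  fixes H00 H01 H11 c0 c1 z0 z1 w0 w1 a :: real
  assumes e0: "H00 * c0 + H01 * c1 = 0" and e1: "H01 * c0 + H11 * c1 = 0"
    and zc: "z0 * c0 + z1 * c1 = 0" and c: "c0 \<noteq> 0 \<or> c1 \<noteq> 0"
    and wz: "w0 * z0 + w1 * z1 = -1"
    and a: "a = w0 * w0 * H00 + w0 * w1 * H01 + w1 * w0 * H01 + w1 * w1 * H11"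
  shows "H00 = a * z0 * z0 \<and> H01 = a * z0 * z1 \<and> H11 = a * z1 * z1"
proof (cases "c0 = 0")
  case False
  define t where "t = c1 / c0"
  have h00: "H00 = - t * H01" using e0 False unfolding t_def by (simp add: field_simps; simp add: algebra_simps eq_neg_iff_add_eq_0)
  have h01: "H01 = - t * H11" using e1 False unfolding t_def by (simp add: field_simps; simp add: algebra_simps eq_neg_iff_add_eq_0)
  have z0: "z0 = - t * z1" using zc False unfolding t_def by (simp add: field_simps; simp add: algebra_simps eq_neg_iff_add_eq_0)
  have w: "z1 * (w1 - t * w0) = -1" using wz unfolding z0 by (simp add: algebra_simps)
  have aa: "a = H11 * (w1 - t * w0) * (w1 - t * w0)" unfolding a h00 h01 by (simp add: algebra_simps)
  have sq: "(z1 * (w1 - t * w0)) * (z1 * (w1 - t * w0)) = 1" using w by simp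
  have "a * z1 * z1 = H11 * ((z1 * (w1 - t * w0)) * (z1 * (w1 - t * w0)))" unfolding aa by (simp add: algebra_simps)
  hence "a * z1 * z1 = H11" unfolding sq by simp 
  thus ?thesis unfolding z0 h00 h01 by (simp add: algebra_simps)
next
  case True
  hence c1: "c1 \<noteq> 0" using c by simp
  define t where "t = c0 / c1"
  have h11: "H11 = - t * H01" using e1 c1 unfolding t_def by (simp add: field_simps; simp add: algebra_simps eq_neg_iff_add_eq_0)
  have h01: "H01 = - t * H00" using e0 c1 unfolding t_def by (simp add: field_simps; simp add: algebra_simps eq_neg_iff_add_eq_0)
  have z1: "z1 = - t * z0" using zc c1 unfolding t_def by (simp add: field_simps; simp add: algebra_simps eq_neg_iff_add_eq_0)
  have w: "z0 * (w0 - t * w1) = -1" using wz unfolding z1 by (simp add: algebra_simps)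
  have aa: "a = H00 * (w0 - t * w1) * (w0 - t * w1)" unfolding a h11 h01 by (simp add: algebra_simps)
  have sq: "(z0 * (w0 - t * w1)) * (z0 * (w0 - t * w1)) = 1" using w by simp
  have "a * z0 * z0 = H00 * ((z0 * (w0 - t * w1)) * (z0 * (w0 - t * w1)))" unfolding aa by (simp add: algebra_simps)
  hence "a * z0 * z0 = H00" unfolding sq by simp 
  thus ?thesis unfolding z1 h11 h01 by (simp add: algebra_simps)
qed


lemma dM_alg:
  fixes g00 g01 g11 p00 p01 p10 p11 z0 z1 y0 y1 e :: real
  assumes e: "e * (g00 * g11 - g01 * g01) = 1"
  assumes M: "g11 * z0 * z0 - 2 * g01 * z0 * z1 + g00 * z1 * z1 = 0"
    and dM: "(p11 + p11) * z0 * z0 + g11 * (y0 * z0 + z0 * y0) - 2 * ((p01 + p10) * z0 * z1 + g01 * (y0 * z1 + z0 * y1))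
             + (p00 + p00) * z1 * z1 + g00 * (y1 * z1 + z1 * y1) = 0"
  shows "((g11 * e) * z0 + (- g01 * e) * z1) * (y0 - (((g11 * e) * p00 + (- g01 * e) * p01) * z0 + ((- g01 * e) * p00 + (g00 * e) * p01) * z1))
       + ((- g01 * e) * z0 + (g00 * e) * z1) * (y1 - (((g11 * e) * p10 + (- g01 * e) * p11) * z0 + ((- g01 * e) * p10 + (g00 * e) * p11) * z1)) = 0"
  using e M dM by algebra


lemma pdf_hpd: "pdiffble i F p \<longleftrightarrow> (\<exists>D. hpd i F D p)"
  using hpd_pdiffble pdiffble_hpd by blast

lemma hpd_unique: "hpd i F D p \<Longrightarrow> hpd i F E p \<Longrightarrow> D = E"
  using hpd_pd by metis

lemma pdf_add: "pdiffble i F p \<Longrightarrow> pdiffble i G p \<Longrightarrow> pdiffble i (\<lambda>q. F q + G q) p"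
  unfolding pdf_hpd using hpd_add by blast
lemma pdf_diff: "pdiffble i F p \<Longrightarrow> pdiffble i G p \<Longrightarrow> pdiffble i (\<lambda>q. F q - G q) p"
  unfolding pdf_hpd using hpd_diff by blast
lemma pdf_mult: "pdiffble i (F::_\<Rightarrow>real) p \<Longrightarrow> pdiffble i G p \<Longrightarrow> pdiffble i (\<lambda>q. F q * G q) p"
  unfolding pdf_hpd using hpd_mult by blast
lemma pdf_divide: "pdiffble i (F::_\<Rightarrow>real) p \<Longrightarrow> pdiffble i G p \<Longrightarrow> G p \<noteq> 0 \<Longrightarrow> pdiffble i (\<lambda>q. F q / G q) p"
  unfolding pdf_hpd using hpd_divide by blast
lemma pdf_mink: "pdiffble i F p \<Longrightarrow> pdiffble i G p \<Longrightarrow> pdiffble i (\<lambda>q. mink t0 (F q) (G q)) p"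
  unfolding pdf_hpd using hpd_mink by blast
lemma pdf_const: "pdiffble i (\<lambda>q. c) p"
  unfolding pdf_hpd using hpd_const by blast
lemma pdf_minus: "pdiffble i F p \<Longrightarrow> pdiffble i (\<lambda>q. - F q) p"
  unfolding pdf_hpd using hpd_minus by blast
lemma pdf_sum: "(\<And>k. k \<in> I \<Longrightarrow> pdiffble i (F k) p) \<Longrightarrow> pdiffble i (\<lambda>q. \<Sum>k\<in>I. F k q) p"
  unfolding pdf_hpd using hpd_sum by metis

lemma gm_fun: "gm t0 X i j = (\<lambda>q. mink t0 (pd i X q) (pd j X q))"
  by (rule ext) (simp add: gm_def)
lemma gm_sym: "gm t0 X i j q = gm t0 X j i q"
  by (simp add: gm_def mink_sym)
lemma gm10: "gm t0 X (Suc 0) 0 q = gm t0 X 0 (Suc 0) q"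
  by (rule gm_sym)
lemma gm_symf: "gm t0 X i j = gm t0 X j i"
  by (rule ext) (simp add: gm_def mink_sym)

locale surf =
  fixes t0 :: "'m::finite" and X :: "real \<times> real \<Rightarrow> real^'m" and U :: "(real \<times> real) set"
  assumes U: "open U" and sm: "smooth2 X U" and gd: "\<And>q. q \<in> U \<Longrightarrow> gdet t0 X q < 0"
begin

lemma gd0: "q \<in> U \<Longrightarrow> gdet t0 X q \<noteq> 0"
proof -
  assume "q \<in> U" hence "gdet t0 X q < 0" by (rule gd)
  thus ?thesis by simp
qed

lemma sm1: "i < 2 \<Longrightarrow> smooth2 (pd i X) U" using smooth2_pd[OF sm] .
lemma sm2: "i < 2 \<Longrightarrow> j < 2 \<Longrightarrow> smooth2 (pd i (pd j X)) U" using smooth2_pd sm1 by blast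
lemma sm3: "k < 2 \<Longrightarrow> i < 2 \<Longrightarrow> j < 2 \<Longrightarrow> smooth2 (pd k (pd i (pd j X))) U" using smooth2_pd sm2 by blast

lemma df0: "i < 2 \<Longrightarrow> q \<in> U \<Longrightarrow> pdiffble i X q" using smooth2_pdiffble[OF sm] .
lemma df1: "k < 2 \<Longrightarrow> i < 2 \<Longrightarrow> q \<in> U \<Longrightarrow> pdiffble k (pd i X) q" using smooth2_pdiffble sm1 by blast
lemma df2: "k < 2 \<Longrightarrow> i < 2 \<Longrightarrow> j < 2 \<Longrightarrow> q \<in> U \<Longrightarrow> pdiffble k (pd i (pd j X)) q"
  using smooth2_pdiffble sm2 by blast

lemma sym2: "q \<in> U \<Longrightarrow> i < 2 \<Longrightarrow> j < 2 \<Longrightarrow> pd i (pd j X) q = pd j (pd i X) q"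
  using pd_sym[OF U _ sm] by blast

lemma sym3a: "q \<in> U \<Longrightarrow> k < 2 \<Longrightarrow> i < 2 \<Longrightarrow> j < 2 \<Longrightarrow>
   pd k (pd i (pd j X)) q = pd k (pd j (pd i X)) q"
  by (rule pd_local(1)[OF df2 U], auto simp: sym2)

lemma sym3b: "q \<in> U \<Longrightarrow> k < 2 \<Longrightarrow> i < 2 \<Longrightarrow> j < 2 \<Longrightarrow>
   pd k (pd i (pd j X)) q = pd i (pd k (pd j X)) q"
  using pd_sym[OF U _ sm1] by blast

lemma hgm: "q \<in> U \<Longrightarrow> k < 2 \<Longrightarrow> i < 2 \<Longrightarrow> j < 2 \<Longrightarrow>
  hpd k (gm t0 X i j) (mink t0 (pd k (pd i X) q) (pd j X q) + mink t0 (pd i X q) (pd k (pd j X) q)) q"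
  unfolding gm_fun by (rule hpd_mink; rule pdiffble_hpd; rule df1) auto

lemma pd_gm: "q \<in> U \<Longrightarrow> k < 2 \<Longrightarrow> i < 2 \<Longrightarrow> j < 2 \<Longrightarrow>
  pd k (gm t0 X i j) q = mink t0 (pd k (pd i X) q) (pd j X q) + mink t0 (pd i X q) (pd k (pd j X) q)"
  using hpd_pd[OF hgm] .

lemma df_gm: "q \<in> U \<Longrightarrow> k < 2 \<Longrightarrow> i < 2 \<Longrightarrow> j < 2 \<Longrightarrow> pdiffble k (gm t0 X i j) q"
  using hpd_pdiffble[OF hgm] .

lemma df_gdet: "q \<in> U \<Longrightarrow> k < 2 \<Longrightarrow> pdiffble k (gdet t0 X) q"
proof -
  assume q: "q \<in> U" "k < 2"
  have e: "gdet t0 X = (\<lambda>q. gm t0 X 0 0 q * gm t0 X 1 1 q - gm t0 X 0 1 q * gm t0 X 1 0 q)"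
    by (rule ext) (simp add: gdet_def)
  show ?thesis unfolding e using q
    by (intro pdf_diff pdf_mult df_gm) auto
qed

lemma df_ginv: "q \<in> U \<Longrightarrow> k < 2 \<Longrightarrow> m < 2 \<Longrightarrow> l < 2 \<Longrightarrow> pdiffble k (ginv t0 X m l) q"
proof -
  assume q: "q \<in> U" "k < 2" "m < 2" "l < 2"
  have e: "ginv t0 X m l = (\<lambda>q. (if m = 0 \<and> l = 0 then gm t0 X 1 1 q
      else if m = 1 \<and> l = 1 then gm t0 X 0 0 q else - gm t0 X m l q) / gdet t0 X q)"
    by (rule ext) (simp add: ginv_def)
  have n: "gdet t0 X q \<noteq> 0" using gd0 q by blast
  have h: "pdiffble k (\<lambda>q. (if m = 0 \<and> l = 0 then gm t0 X 1 1 q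
      else if m = 1 \<and> l = 1 then gm t0 X 0 0 q else - gm t0 X m l q)) q"
    using q by (cases "m = 0 \<and> l = 0"; cases "m = 1 \<and> l = 1") (auto intro!: pdf_minus df_gm)
  show ?thesis unfolding e using q n
    by (intro pdf_divide df_gdet h) auto
qed

lemma chrU: "q \<in> U \<Longrightarrow> m < 2 \<Longrightarrow> i < 2 \<Longrightarrow> j < 2 \<Longrightarrow>
  christoffel t0 X m i j q = (\<Sum>l<2. ginv t0 X m l q * mink t0 (pd i (pd j X) q) (pd l X q))"
proof -
  assume q: "q \<in> U" "m < 2" "i < 2" "j < 2"
  show ?thesis unfolding christoffel_def sum_distrib_left
  proof (rule sum.cong[OF refl])
    fix l assume "l \<in> {..<2::nat}"
    hence l: "l < 2" by simp
    show "1 / 2 * (ginv t0 X m l q * (pd i (gm t0 X j l) q + pd j (gm t0 X i l) q - pd l (gm t0 X i j) q))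
        = ginv t0 X m l q * mink t0 (pd i (pd j X) q) (pd l X q)"
      using q l by (simp add: pd_gm sym2[of q i j] sym2[of q i l] sym2[of q j l] mink_sym algebra_simps)
  qed
qed

lemma chr_fun: "m < 2 \<Longrightarrow> i < 2 \<Longrightarrow> j < 2 \<Longrightarrow> q \<in> U \<Longrightarrow>
   (\<lambda>q. \<Sum>l<2. ginv t0 X m l q * mink t0 (pd i (pd j X) q) (pd l X q)) q = christoffel t0 X m i j q"
  using chrU by simp

lemma df_chr: "q \<in> U \<Longrightarrow> k < 2 \<Longrightarrow> m < 2 \<Longrightarrow> i < 2 \<Longrightarrow> j < 2 \<Longrightarrow> pdiffble k (christoffel t0 X m i j) q"
proof -
  assume q: "q \<in> U" "k < 2" "m < 2" "i < 2" "j < 2"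
  have "pdiffble k (\<lambda>q. \<Sum>l<2. ginv t0 X m l q * mink t0 (pd i (pd j X) q) (pd l X q)) q"
    using q by (intro pdf_sum pdf_mult pdf_mink df_ginv df2 df1) auto
  thus ?thesis by (rule pd_local(2)[OF _ U q(1)]) (use chr_fun q in auto)
qed

lemma chr_sym: "christoffel t0 X m i j q = christoffel t0 X m j i q"
  unfolding christoffel_def by (simp add: gm_symf[of t0 X i j] algebra_simps)

end


definition Hf :: "'m::finite \<Rightarrow> (real \<times> real \<Rightarrow> real^'m) \<Rightarrow> real^'m \<Rightarrow> nat \<Rightarrow> nat \<Rightarrow> real \<times> real \<Rightarrow> real" where
  "Hf t0 X Z i j q = mink t0 Z (pd i (pd j X) q) - (\<Sum>m<2. christoffel t0 X m i j q * mink t0 Z (pd m X q))"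

definition zf :: "'m::finite \<Rightarrow> (real \<times> real \<Rightarrow> real^'m) \<Rightarrow> real^'m \<Rightarrow> nat \<Rightarrow> real \<times> real \<Rightarrow> real" where
  "zf t0 X Z i q = mink t0 Z (pd i X q)"

context surf begin

lemma inv2_alg0:
  fixes a b c v0 v1 d :: real
  assumes dd: "d = a * c - b * b" and d: "d \<noteq> 0"
  shows "a * ((c / d) * v0 + (- b / d) * v1) + b * ((- b / d) * v0 + (a / d) * v1) = v0"
    and "b * ((c / d) * v0 + (- b / d) * v1) + c * ((- b / d) * v0 + (a / d) * v1) = v1"
proof -
  have "a * ((c / d) * v0 + (- b / d) * v1) + b * ((- b / d) * v0 + (a / d) * v1) = ((a * c - b * b) * v0) / d"
    using d by (simp add: field_simps)
  thus "a * ((c / d) * v0 + (- b / d) * v1) + b * ((- b / d) * v0 + (a / d) * v1) = v0"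
    using d unfolding dd by simp
  have "b * ((c / d) * v0 + (- b / d) * v1) + c * ((- b / d) * v0 + (a / d) * v1) = ((a * c - b * b) * v1) / d"
    using d by (simp add: field_simps)
  thus "b * ((c / d) * v0 + (- b / d) * v1) + c * ((- b / d) * v0 + (a / d) * v1) = v1"
    using d unfolding dd by simp
qed

lemmas inv2_alg = inv2_alg0[OF refl]

lemma inv2a: "q \<in> U \<Longrightarrow> n < 2 \<Longrightarrow>
  (\<Sum>l<2. gm t0 X n l q * (\<Sum>m<2. ginv t0 X l m q * v m)) = v n"
proof -
  assume q: "q \<in> U" "n < 2"
  define a where "a = gm t0 X 0 0 q"
  define b where "b = gm t0 X 0 1 q"
  define c where "c = gm t0 X 1 1 q"
  have d: "a * c - b * b \<noteq> 0"
    using gd0[OF q(1)] by (simp add: gdet_def gm_sym[of t0 X 1 0] gm_sym[of t0 X "Suc 0" 0] a_def b_def c_def)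
  have g10: "gm t0 X 1 0 q = b" unfolding b_def by (rule gm_sym)
  have gi: "ginv t0 X 0 0 q = c / (a * c - b * b)" "ginv t0 X 0 1 q = - b / (a * c - b * b)"
     "ginv t0 X 1 0 q = - b / (a * c - b * b)" "ginv t0 X 1 1 q = a / (a * c - b * b)"
    by (simp_all add: ginv_def gdet_def a_def b_def c_def gm10)
  have bb: "gm t0 X 0 (Suc 0) q = b" "gm t0 X (Suc 0) 0 q = b" "gm t0 X (Suc 0) (Suc 0) q = c"
    by (simp_all add: b_def c_def gm10)
  have "n = 0 \<or> n = 1" using q(2) by auto
  thus ?thesis
  proof
    assume n: "n = 0"
    show ?thesis unfolding n sum2 gi using inv2_alg(1)[OF d, of "v 0" "v 1"]
      by (simp add: a_def[symmetric] bb)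
  next
    assume n: "n = 1"
    show ?thesis unfolding n sum2 gi using inv2_alg(2)[OF d, of "v 0" "v 1"]
      by (simp add: bb)
  qed
qed

lemma inv2b: "q \<in> U \<Longrightarrow> n < 2 \<Longrightarrow>
  (\<Sum>l<2. (\<Sum>m<2. ginv t0 X l m q * v m) * gm t0 X l n q) = v n"
proof -
  assume q: "q \<in> U" "n < 2"
  have "(\<Sum>l<2. (\<Sum>m<2. ginv t0 X l m q * v m) * gm t0 X l n q)
      = (\<Sum>l<2. gm t0 X n l q * (\<Sum>m<2. ginv t0 X l m q * v m))"
    by (rule sum.cong) (auto simp: gm_sym[of t0 X n])
  thus ?thesis using inv2a[OF q] by simp
qed

lemma GG: "q \<in> U \<Longrightarrow> n < 2 \<Longrightarrow> i < 2 \<Longrightarrow> j < 2 \<Longrightarrow>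
  (\<Sum>l<2. gm t0 X n l q * christoffel t0 X l i j q) = mink t0 (pd i (pd j X) q) (pd n X q)"
proof -
  assume q: "q \<in> U" "n < 2" "i < 2" "j < 2"
  have "(\<Sum>l<2. gm t0 X n l q * christoffel t0 X l i j q)
     = (\<Sum>l<2. gm t0 X n l q * (\<Sum>m<2. ginv t0 X l m q * mink t0 (pd i (pd j X) q) (pd m X q)))"
    by (rule sum.cong) (use q chrU in auto)
  also have "\<dots> = mink t0 (pd i (pd j X) q) (pd n X q)" by (rule inv2a[OF q(1,2)])
  finally show ?thesis .
qed

lemma DG: "p \<in> U \<Longrightarrow> k < 2 \<Longrightarrow> n < 2 \<Longrightarrow> i < 2 \<Longrightarrow> j < 2 \<Longrightarrow>
  (\<Sum>l<2. pd k (gm t0 X n l) p * christoffel t0 X l i j p + gm t0 X n l p * pd k (christoffel t0 X l i j) p)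
  = mink t0 (pd k (pd i (pd j X)) p) (pd n X p) + mink t0 (pd i (pd j X) p) (pd k (pd n X) p)"
proof -
  assume p: "p \<in> U" "k < 2" "n < 2" "i < 2" "j < 2"
  have h1: "hpd k (\<lambda>q. \<Sum>l<2. gm t0 X n l q * christoffel t0 X l i j q)
     (\<Sum>l<2. pd k (gm t0 X n l) p * christoffel t0 X l i j p + gm t0 X n l p * pd k (christoffel t0 X l i j) p) p"
    using p by (intro hpd_sum hpd_mult pdiffble_hpd df_gm df_chr) auto
  have h1': "hpd k (\<lambda>q. mink t0 (pd i (pd j X) q) (pd n X q))
     (\<Sum>l<2. pd k (gm t0 X n l) p * christoffel t0 X l i j p + gm t0 X n l p * pd k (christoffel t0 X l i j) p) p"
    by (rule hpd_local[OF h1 U p(1)]) (use GG p in auto)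
  have h2: "hpd k (\<lambda>q. mink t0 (pd i (pd j X) q) (pd n X q))
     (mink t0 (pd k (pd i (pd j X)) p) (pd n X p) + mink t0 (pd i (pd j X) p) (pd k (pd n X) p)) p"
    using p by (intro hpd_mink pdiffble_hpd df2 df1) auto
  show ?thesis using hpd_unique[OF h1' h2] .
qed

lemma hzf: "q \<in> U \<Longrightarrow> k < 2 \<Longrightarrow> i < 2 \<Longrightarrow> hpd k (zf t0 X Z i) (mink t0 Z (pd k (pd i X) q)) q"
proof -
  assume q: "q \<in> U" "k < 2" "i < 2"
  have e: "zf t0 X Z i = (\<lambda>q. mink t0 Z (pd i X q))" by (rule ext) (simp add: zf_def)
  show ?thesis unfolding e using hpd_mink[OF hpd_const pdiffble_hpd[OF df1[OF q(2,3,1)]], of t0 Z]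
    by simp
qed

lemma hHf: "p \<in> U \<Longrightarrow> k < 2 \<Longrightarrow> i < 2 \<Longrightarrow> j < 2 \<Longrightarrow>
  hpd k (Hf t0 X Z i j) (mink t0 Z (pd k (pd i (pd j X)) p)
     - (\<Sum>m<2. pd k (christoffel t0 X m i j) p * mink t0 Z (pd m X p)
               + christoffel t0 X m i j p * mink t0 Z (pd k (pd m X) p))) p"
proof -
  assume p: "p \<in> U" "k < 2" "i < 2" "j < 2"
  have e: "Hf t0 X Z i j = (\<lambda>q. mink t0 Z (pd i (pd j X) q) - (\<Sum>m<2. christoffel t0 X m i j q * zf t0 X Z m q))"
    by (rule ext) (simp add: Hf_def zf_def)
  have a: "hpd k (\<lambda>q. mink t0 Z (pd i (pd j X) q)) (mink t0 Z (pd k (pd i (pd j X)) p)) p"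
    using hpd_mink[OF hpd_const pdiffble_hpd[OF df2[OF p(2,3,4,1)]], of t0 Z] by simp
  have b: "hpd k (\<lambda>q. \<Sum>m<2. christoffel t0 X m i j q * zf t0 X Z m q)
     (\<Sum>m<2. pd k (christoffel t0 X m i j) p * zf t0 X Z m p + christoffel t0 X m i j p * mink t0 Z (pd k (pd m X) p)) p"
    using p by (intro hpd_sum hpd_mult pdiffble_hpd df_chr hzf) auto
  show ?thesis unfolding e using hpd_diff[OF a b] by (simp add: zf_def)
qed

lemma df_Hf: "p \<in> U \<Longrightarrow> k < 2 \<Longrightarrow> i < 2 \<Longrightarrow> j < 2 \<Longrightarrow> pdiffble k (Hf t0 X Z i j) p"
  using hHf hpd_pdiffble by blast

lemma df_zf: "p \<in> U \<Longrightarrow> k < 2 \<Longrightarrow> i < 2 \<Longrightarrow> pdiffble k (zf t0 X Z i) p"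
  using hzf hpd_pdiffble by blast

lemma ortho: "q \<in> U \<Longrightarrow> l < 2 \<Longrightarrow> mink t0 (norpart t0 X V q) (pd l X q) = 0"
proof -
  assume q: "q \<in> U" "l < 2"
  have "mink t0 (norpart t0 X V q) (pd l X q)
     = mink t0 V (pd l X q) - (\<Sum>i<2. (\<Sum>j<2. ginv t0 X i j q * mink t0 V (pd j X q)) * gm t0 X i l q)"
    by (simp add: norpart_def tanpart_def tcoef_def mink_lin gm_def)
  also have "\<dots> = 0" using inv2b[OF q, of "\<lambda>j. mink t0 V (pd j X q)"] by simp
  finally show ?thesis .
qed

lemma nor_mink: "q \<in> U \<Longrightarrow>
  mink t0 (norpart t0 X V q) (norpart t0 X W q) = mink t0 V W - (\<Sum>k<2. tcoef t0 X V k q * mink t0 (pd k X q) W)"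
proof -
  assume q: "q \<in> U"
  have "mink t0 (norpart t0 X V q) (norpart t0 X W q)
     = mink t0 (norpart t0 X V q) W - (\<Sum>i<2. tcoef t0 X W i q * mink t0 (norpart t0 X V q) (pd i X q))"
    by (simp add: norpart_def[of t0 X W] tanpart_def mink_lin)
  also have "\<dots> = mink t0 (norpart t0 X V q) W" using ortho[OF q] by simp
  also have "\<dots> = mink t0 V W - (\<Sum>k<2. tcoef t0 X V k q * mink t0 (pd k X q) W)"
    by (simp add: norpart_def tanpart_def mink_lin)
  finally show ?thesis .
qed

lemma tcoef_X2: "q \<in> U \<Longrightarrow> k < 2 \<Longrightarrow> i < 2 \<Longrightarrow> j < 2 \<Longrightarrow>
   tcoef t0 X (pd i (pd j X) q) k q = christoffel t0 X k i j q"
  by (simp add: tcoef_def chrU)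

lemma Hf_nor: "q \<in> U \<Longrightarrow> i < 2 \<Longrightarrow> j < 2 \<Longrightarrow>
   mink t0 (norpart t0 X (pd i (pd j X) q) q) (norpart t0 X Z q) = Hf t0 X Z i j q"
proof -
  assume q: "q \<in> U" "i < 2" "j < 2"
  have s: "(\<Sum>k<2. tcoef t0 X (pd i (pd j X) q) k q * mink t0 (pd k X q) Z)
     = (\<Sum>k<2. christoffel t0 X k i j q * mink t0 Z (pd k X q))"
  proof (rule sum.cong[OF refl])
    fix k assume "k \<in> {..<2::nat}"
    hence k: "k < 2" by simp
    show "tcoef t0 X (pd i (pd j X) q) k q * mink t0 (pd k X q) Z = christoffel t0 X k i j q * mink t0 Z (pd k X q)"
      using tcoef_X2[OF q(1) k q(2,3)] mink_sym[of t0 "pd k X q" Z] by simp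
  qed
  show ?thesis unfolding nor_mink[OF q(1)] s Hf_def by (simp add: mink_sym)
qed

end


definition Mf :: "'m::finite \<Rightarrow> (real \<times> real \<Rightarrow> real^'m) \<Rightarrow> real^'m \<Rightarrow> real \<times> real \<Rightarrow> real" where
  "Mf t0 X Z q = gm t0 X 1 1 q * zf t0 X Z 0 q * zf t0 X Z 0 q - 2 * gm t0 X 0 1 q * zf t0 X Z 0 q * zf t0 X Z 1 q
     + gm t0 X 0 0 q * zf t0 X Z 1 q * zf t0 X Z 1 q"

context surf begin

lemma tcoefZ: "tcoef t0 X Z i q = (\<Sum>j<2. ginv t0 X i j q * zf t0 X Z j q)"
  by (simp add: tcoef_def zf_def)

lemma cg: "q \<in> U \<Longrightarrow> n < 2 \<Longrightarrow> (\<Sum>l<2. tcoef t0 X Z l q * gm t0 X l n q) = zf t0 X Z n q"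
  unfolding tcoefZ by (rule inv2b)

lemma mink_tan: "mink t0 (tanpart t0 X Z q) (tvec X w q)
   = (\<Sum>j<2. w j q * (\<Sum>l<2. tcoef t0 X Z l q * gm t0 X l j q))"
  by (simp add: tanpart_def tvec_def mink_lin gm_def sum2 algebra_simps)

lemma mink_tan2: "mink t0 (tanpart t0 X Z q) (tanpart t0 X Z q)
   = (\<Sum>j<2. tcoef t0 X Z j q * (\<Sum>l<2. tcoef t0 X Z l q * gm t0 X l j q))"
  by (simp add: tanpart_def mink_lin gm_def sum2 algebra_simps)

lemma TW: "q \<in> U \<Longrightarrow> mink t0 (tanpart t0 X Z q) (tvec X w q) = w 0 q * zf t0 X Z 0 q + w 1 q * zf t0 X Z 1 q"
proof -
  assume q: "q \<in> U"
  show ?thesis unfolding mink_tan using cg[OF q, of 0] cg[OF q, of 1] by (simp add: sum2)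
qed

lemma TT: "q \<in> U \<Longrightarrow> mink t0 (tanpart t0 X Z q) (tanpart t0 X Z q)
    = tcoef t0 X Z 0 q * zf t0 X Z 0 q + tcoef t0 X Z 1 q * zf t0 X Z 1 q"
proof -
  assume q: "q \<in> U"
  show ?thesis unfolding mink_tan2 using cg[OF q, of 0] cg[OF q, of 1] by (simp add: sum2)
qed

lemma Mf_eq: "q \<in> U \<Longrightarrow> Mf t0 X Z q = gdet t0 X q * (tcoef t0 X Z 0 q * zf t0 X Z 0 q + tcoef t0 X Z 1 q * zf t0 X Z 1 q)"
proof -
  assume q: "q \<in> U"
  have d: "gdet t0 X q \<noteq> 0" using gd0[OF q] .
  show ?thesis using d unfolding Mf_def tcoefZ
    by (simp add: sum2 ginv_def gm10 field_simps; simp add: gdet_def gm10 algebra_simps)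
qed

lemma tan_nz: "tanpart t0 X Z q \<noteq> 0 \<Longrightarrow> tcoef t0 X Z 0 q \<noteq> 0 \<or> tcoef t0 X Z 1 q \<noteq> 0"
  by (auto simp: tanpart_def sum2)

lemma z_nz: "tanpart t0 X Z q \<noteq> 0 \<Longrightarrow> zf t0 X Z 0 q \<noteq> 0 \<or> zf t0 X Z 1 q \<noteq> 0"
  by (auto simp: tanpart_def sum2 tcoefZ)

lemma Hf_sym: "q \<in> U \<Longrightarrow> i < 2 \<Longrightarrow> j < 2 \<Longrightarrow> Hf t0 X Z i j q = Hf t0 X Z j i q"
  unfolding Hf_def by (simp add: sym2[of q i j] chr_sym[of m i j for m])

lemma a_eq: "q \<in> U \<Longrightarrow>
   mink t0 (sff t0 X (\<lambda>i. w i q) (\<lambda>i. w i q) q) (norpart t0 X Z q)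
   = (\<Sum>i<2. \<Sum>j<2. w i q * w j q * Hf t0 X Z i j q)"
proof -
  assume q: "q \<in> U"
  have "mink t0 (sff t0 X (\<lambda>i. w i q) (\<lambda>i. w i q) q) (norpart t0 X Z q)
    = (\<Sum>i<2. \<Sum>j<2. w i q * w j q * mink t0 (norpart t0 X (pd i (pd j X) q) q) (norpart t0 X Z q))"
    by (simp add: sff_def mink_lin)
  also have "\<dots> = (\<Sum>i<2. \<Sum>j<2. w i q * w j q * Hf t0 X Z i j q)"
    using q by (simp add: sum2 Hf_nor)
  finally show ?thesis .
qed

end


context surf begin

lemma Mf_fun: "Mf t0 X Z = (\<lambda>q. gm t0 X 1 1 q * zf t0 X Z 0 q * zf t0 X Z 0 q - 2 * gm t0 X 0 1 q * zf t0 X Z 0 q * zf t0 X Z 1 q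
     + gm t0 X 0 0 q * zf t0 X Z 1 q * zf t0 X Z 1 q)"
  by (rule ext) (simp add: Mf_def)

lemma Ek:
  assumes q: "q \<in> U" and k: "k < 2" and M0: "\<And>q. q \<in> U \<Longrightarrow> Mf t0 X Z q = 0"
  shows "tcoef t0 X Z 0 q * Hf t0 X Z k 0 q + tcoef t0 X Z 1 q * Hf t0 X Z k 1 q = 0"
proof -
  define p where "p = (\<lambda>i j. mink t0 (pd k (pd i X) q) (pd j X q))"
  define y where "y = (\<lambda>j. mink t0 Z (pd k (pd j X) q))"
  define g00 where "g00 = gm t0 X 0 0 q"
  define g01 where "g01 = gm t0 X 0 1 q"
  define g11 where "g11 = gm t0 X 1 1 q"
  define z0 where "z0 = zf t0 X Z 0 q"
  define z1 where "z1 = zf t0 X Z 1 q"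
  have hg: "hpd k (gm t0 X i j) (p i j + p j i) q" if "i < 2" "j < 2" for i j
    using hgm[OF q k that] by (simp add: p_def mink_sym[of t0 "pd i X q"])
  have hz: "hpd k (zf t0 X Z i) (y i) q" if "i < 2" for i
    using hzf[OF q k that] by (simp add: y_def)
  have h1: "hpd k (Mf t0 X Z)
     (((p 1 1 + p 1 1) * zf t0 X Z 0 q + gm t0 X 1 1 q * y 0) * zf t0 X Z 0 q + gm t0 X 1 1 q * zf t0 X Z 0 q * y 0
      - (((0 * gm t0 X 0 1 q + 2 * (p 0 1 + p 1 0)) * zf t0 X Z 0 q + 2 * gm t0 X 0 1 q * y 0) * zf t0 X Z 1 q
          + 2 * gm t0 X 0 1 q * zf t0 X Z 0 q * y 1)
      + (((p 0 0 + p 0 0) * zf t0 X Z 1 q + gm t0 X 0 0 q * y 1) * zf t0 X Z 1 q + gm t0 X 0 0 q * zf t0 X Z 1 q * y 1)) q"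
    unfolding Mf_fun by (intro hpd_add hpd_diff hpd_mult hpd_const hg hz) auto
  have h2: "hpd k (Mf t0 X Z) 0 q"
    by (rule hpd_local[OF hpd_const U q]) (use M0 in auto)
  have D0: "((p 1 1 + p 1 1) * zf t0 X Z 0 q + gm t0 X 1 1 q * y 0) * zf t0 X Z 0 q + gm t0 X 1 1 q * zf t0 X Z 0 q * y 0
      - (((0 * gm t0 X 0 1 q + 2 * (p 0 1 + p 1 0)) * zf t0 X Z 0 q + 2 * gm t0 X 0 1 q * y 0) * zf t0 X Z 1 q
          + 2 * gm t0 X 0 1 q * zf t0 X Z 0 q * y 1)
      + (((p 0 0 + p 0 0) * zf t0 X Z 1 q + gm t0 X 0 0 q * y 1) * zf t0 X Z 1 q + gm t0 X 0 0 q * zf t0 X Z 1 q * y 1) = 0"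
    using hpd_unique[OF h1 h2] .
  have dM: "(p 1 1 + p 1 1) * z0 * z0 + g11 * (y 0 * z0 + z0 * y 0) - 2 * ((p 0 1 + p 1 0) * z0 * z1 + g01 * (y 0 * z1 + z0 * y 1))
             + (p 0 0 + p 0 0) * z1 * z1 + g00 * (y 1 * z1 + z1 * y 1) = 0"
    using D0 unfolding g00_def g01_def g11_def z0_def z1_def by (simp add: algebra_simps)
  have M: "g11 * z0 * z0 - 2 * g01 * z0 * z1 + g00 * z1 * z1 = 0"
    using M0[OF q] unfolding Mf_def g00_def g01_def g11_def z0_def z1_def .
  define e where "e = 1 / gdet t0 X q"
  have de: "gdet t0 X q = g00 * g11 - g01 * g01" unfolding gdet_def g00_def g01_def g11_def by (simp add: gm10)
  have e: "e * (g00 * g11 - g01 * g01) = 1" unfolding e_def de[symmetric] using gd0[OF q] by simp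
  have gi: "ginv t0 X 0 0 q = g11 * e" "ginv t0 X 0 1 q = - g01 * e" "ginv t0 X 1 0 q = - g01 * e"
     "ginv t0 X 1 1 q = g00 * e"
    unfolding e_def by (simp_all add: ginv_def g00_def g01_def g11_def gm10)
  have X: "((g11 * e) * z0 + (- g01 * e) * z1) * (y 0 - (((g11 * e) * p 0 0 + (- g01 * e) * p 0 1) * z0 + ((- g01 * e) * p 0 0 + (g00 * e) * p 0 1) * z1))
       + ((- g01 * e) * z0 + (g00 * e) * z1) * (y 1 - (((g11 * e) * p 1 0 + (- g01 * e) * p 1 1) * z0 + ((- g01 * e) * p 1 0 + (g00 * e) * p 1 1) * z1)) = 0"
    by (rule dM_alg[OF e M dM])
  have chr: "christoffel t0 X m k j q = ginv t0 X m 0 q * p j 0 + ginv t0 X m 1 q * p j 1" if "m < 2" "j < 2" for m j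
    using chrU[OF q that(1) k that(2)] by (simp add: sum2 p_def sym2[OF q k that(2)])
  have Hk: "Hf t0 X Z k j q = y j - (christoffel t0 X 0 k j q * z0 + christoffel t0 X 1 k j q * z1)" for j
    by (simp add: Hf_def y_def sum2 z0_def z1_def zf_def)
  show ?thesis unfolding tcoefZ sum2 Hk using X
    by (simp add: chr gi z0_def[symmetric] z1_def[symmetric] del: One_nat_def)
qed

end


context surf begin

lemma H_rank:
  assumes q: "q \<in> U" and M0: "\<And>q. q \<in> U \<Longrightarrow> Mf t0 X Z q = 0"
    and tn: "tanpart t0 X Z q \<noteq> 0"
    and wz: "w 0 q * zf t0 X Z 0 q + w 1 q * zf t0 X Z 1 q = -1"
    and aq: "aq = (\<Sum>i<2. \<Sum>j<2. w i q * w j q * Hf t0 X Z i j q)"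
    and ij: "i < 2" "j < 2"
  shows "Hf t0 X Z i j q = aq * zf t0 X Z i q * zf t0 X Z j q"
proof -
  have e0: "Hf t0 X Z 0 0 q * tcoef t0 X Z 0 q + Hf t0 X Z 0 1 q * tcoef t0 X Z 1 q = 0"
    using Ek[OF q _ M0, of 0] by (simp add: algebra_simps)
  have s: "Hf t0 X Z 1 0 q = Hf t0 X Z 0 1 q" using Hf_sym[OF q, of 1 0] by simp
  have e1: "Hf t0 X Z 0 1 q * tcoef t0 X Z 0 q + Hf t0 X Z 1 1 q * tcoef t0 X Z 1 q = 0"
    using Ek[OF q _ M0, of 1] s by (simp add: algebra_simps)
  have zc: "zf t0 X Z 0 q * tcoef t0 X Z 0 q + zf t0 X Z 1 q * tcoef t0 X Z 1 q = 0"
  proof -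
    have "gdet t0 X q * (tcoef t0 X Z 0 q * zf t0 X Z 0 q + tcoef t0 X Z 1 q * zf t0 X Z 1 q) = 0"
      using M0[OF q] Mf_eq[OF q] by simp
    hence "tcoef t0 X Z 0 q * zf t0 X Z 0 q + tcoef t0 X Z 1 q * zf t0 X Z 1 q = 0"
      using gd0[OF q] by simp
    thus ?thesis by (simp add: algebra_simps)
  qed
  have a: "aq = w 0 q * w 0 q * Hf t0 X Z 0 0 q + w 0 q * w 1 q * Hf t0 X Z 0 1 q
     + w 1 q * w 0 q * Hf t0 X Z 0 1 q + w 1 q * w 1 q * Hf t0 X Z 1 1 q"
    unfolding aq using s by (simp add: sum2)
  note r = rank_alg[OF e0 e1 zc tan_nz[OF tn] wz a]
  show ?thesis using ij r s by (auto simp: less_Suc_eq numeral_2_eq_2)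
qed

end


theorem mainTheorem5:
  fixes t0 :: "'m::finite"
    and X :: "real \<times> real \<Rightarrow> real^'m"
    and U :: "(real \<times> real) set"
    and Z :: "real^'m"
    and w :: "nat \<Rightarrow> real \<times> real \<Rightarrow> real"
  assumes surf: "timelike_surface t0 X U"
    and unitZ: "mink t0 Z Z = 1"
    and null_dir: "\<forall>p\<in>U. tanpart t0 X Z p \<noteq> 0 \<and>
                         mink t0 (tanpart t0 X Z p) (tanpart t0 X Z p) = 0"
    and W_light: "\<forall>p\<in>U. tvec X w p \<noteq> 0 \<and> mink t0 (tvec X w p) (tvec X w p) = 0"
    and W_norm: "\<forall>p\<in>U. mink t0 (tanpart t0 X Z p) (tvec X w p) = -1"
    and a_def: "a = (\<lambda>p. mink t0 (sff t0 X (\<lambda>i. w i p) (\<lambda>i. w i p) p) (norpart t0 X Z p))"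
  shows "\<forall>p\<in>U. gauss_curv t0 X p = dir_deriv (tcoef t0 X Z) a p"
proof
  fix p assume p: "p \<in> U"
  interpret S: surf t0 X U
    using surf unfolding timelike_surface_def by unfold_locales auto
  have U: "open U" using surf unfolding timelike_surface_def by auto
  have M0: "\<And>q. q \<in> U \<Longrightarrow> Mf t0 X Z q = 0"
    using null_dir S.Mf_eq S.TT by simp
  have aeq: "\<And>q. q \<in> U \<Longrightarrow> a q = (\<Sum>i<2. \<Sum>j<2. w i q * w j q * Hf t0 X Z i j q)"
    unfolding a_def using S.a_eq by simp
  have wz: "\<And>q. q \<in> U \<Longrightarrow> w 0 q * zf t0 X Z 0 q + w 1 q * zf t0 X Z 1 q = -1"
    using W_norm S.TW by metis
  have Hr: "\<And>q i j. q \<in> U \<Longrightarrow> i < 2 \<Longrightarrow> j < 2 \<Longrightarrow> Hf t0 X Z i j q = a q * zf t0 X Z i q * zf t0 X Z j q"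
  proof -
    fix q and i j :: nat assume q: "q \<in> U" and ij: "i < 2" "j < 2"
    show "Hf t0 X Z i j q = a q * zf t0 X Z i q * zf t0 X Z j q"
      using S.H_rank[where Z=Z and w=w and q=q and aq="a q", OF q M0 _ wz[OF q] aeq[OF q] ij] null_dir q by blast
  qed
  have znz: "\<And>q. q \<in> U \<Longrightarrow> zf t0 X Z 0 q * zf t0 X Z 0 q + zf t0 X Z 1 q * zf t0 X Z 1 q \<noteq> 0"
  proof -
    fix q assume q: "q \<in> U"
    have "zf t0 X Z 0 q \<noteq> 0 \<or> zf t0 X Z 1 q \<noteq> 0" using S.z_nz null_dir q by blast
    thus "zf t0 X Z 0 q * zf t0 X Z 0 q + zf t0 X Z 1 q * zf t0 X Z 1 q \<noteq> 0"
      by (metis add_nonneg_eq_0_iff mult_eq_0_iff zero_le_square)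
  qed
  have aU: "\<And>q. q \<in> U \<Longrightarrow> (\<lambda>q. (Hf t0 X Z 0 0 q + Hf t0 X Z 1 1 q) /
      (zf t0 X Z 0 q * zf t0 X Z 0 q + zf t0 X Z 1 q * zf t0 X Z 1 q)) q = a q"
  proof -
    fix q assume q: "q \<in> U"
    show "(\<lambda>q. (Hf t0 X Z 0 0 q + Hf t0 X Z 1 1 q) /
      (zf t0 X Z 0 q * zf t0 X Z 0 q + zf t0 X Z 1 q * zf t0 X Z 1 q)) q = a q"
      using Hr[OF q, of 0 0] Hr[OF q, of 1 1] znz[OF q] by (simp add: field_simps)
  qed
  have dfa: "\<And>k::nat. k < 2 \<Longrightarrow> pdiffble k a p"
  proof -
    fix k :: nat assume k: "k < 2"
    have "pdiffble k (\<lambda>q. (Hf t0 X Z 0 0 q + Hf t0 X Z 1 1 q) /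
      (zf t0 X Z 0 q * zf t0 X Z 0 q + zf t0 X Z 1 q * zf t0 X Z 1 q)) p"
      using p k znz[OF p] by (intro pdf_divide pdf_add pdf_mult S.df_Hf S.df_zf) auto
    thus "pdiffble k a p" by (rule pd_local(2)[OF _ U p aU])
  qed
  define z where "z = (\<lambda>n. zf t0 X Z n p)"
  define zz where "zz = (\<lambda>i j. mink t0 Z (pd i (pd j X) p))"
  define zzz where "zzz = (\<lambda>k i j. mink t0 Z (pd k (pd i (pd j X)) p))"
  define G where "G = (\<lambda>m i j. christoffel t0 X m i j p)"
  define D where "D = (\<lambda>k m i j. pd k (christoffel t0 X m i j) p)"
  define ad where "ad = (\<lambda>k. pd k a p)"
  define aa where "aa = a p"
  have zm: "\<And>m. mink t0 Z (pd m X p) = z m" by (simp add: z_def zf_def)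
  have EH: "\<And>i j. i < 2 \<Longrightarrow> j < 2 \<Longrightarrow> zz i j = aa * z i * z j + (\<Sum>m<2. G m i j * z m)"
  proof -
    fix i j :: nat assume ij: "i < 2" "j < 2"
    show "zz i j = aa * z i * z j + (\<Sum>m<2. G m i j * z m)"
      using Hr[OF p ij] unfolding Hf_def zz_def aa_def z_def G_def zm[unfolded z_def] by simp
  qed
  have EA: "\<And>k i j. k < 2 \<Longrightarrow> i < 2 \<Longrightarrow> j < 2 \<Longrightarrow> (\<Sum>m<2. D k m i j * z m) = zzz k i j - (\<Sum>m<2. G m i j * zz k m)
               - (ad k * z i * z j + aa * (zz k i * z j + z i * zz k j))"
  proof -
    fix k i j :: nat assume kij: "k < 2" "i < 2" "j < 2"
    have h1: "hpd k (\<lambda>q. a q * zf t0 X Z i q * zf t0 X Z j q)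
       ((pd k a p * zf t0 X Z i p + a p * mink t0 Z (pd k (pd i X) p)) * zf t0 X Z j p
         + a p * zf t0 X Z i p * mink t0 Z (pd k (pd j X) p)) p"
      using kij p by (intro hpd_mult pdiffble_hpd dfa S.hzf) auto
    have h1': "hpd k (Hf t0 X Z i j)
       ((pd k a p * zf t0 X Z i p + a p * mink t0 Z (pd k (pd i X) p)) * zf t0 X Z j p
         + a p * zf t0 X Z i p * mink t0 Z (pd k (pd j X) p)) p"
      by (rule hpd_local[OF h1 U p]) (use Hr kij in auto)
    have e: "(pd k a p * zf t0 X Z i p + a p * mink t0 Z (pd k (pd i X) p)) * zf t0 X Z j p
         + a p * zf t0 X Z i p * mink t0 Z (pd k (pd j X) p)
       = mink t0 Z (pd k (pd i (pd j X)) p)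
     - (\<Sum>m<2. pd k (christoffel t0 X m i j) p * mink t0 Z (pd m X p)
               + christoffel t0 X m i j p * mink t0 Z (pd k (pd m X) p))"
      using hpd_unique[OF h1' S.hHf[OF p kij]] .
    hence "(ad k * z i + aa * zz k i) * z j + aa * z i * zz k j
       = zzz k i j - (\<Sum>m<2. D k m i j * z m + G m i j * zz k m)"
      unfolding ad_def aa_def zz_def zzz_def D_def G_def zm z_def .
    thus "(\<Sum>m<2. D k m i j * z m) = zzz k i j - (\<Sum>m<2. G m i j * zz k m)
               - (ad k * z i * z j + aa * (zz k i * z j + z i * zz k j))"
      by (simp add: sum2 algebra_simps)
  qed
  have ricci: "\<And>i. i < 2 \<Longrightarrow> (\<Sum>n<2. z n * riemann t0 X n 0 1 i p) = z i * (ad 1 * z 0 - ad 0 * z 1)"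
  proof -
    fix i :: nat assume i: "i < 2"
    have zzz1: "zzz 0 1 i = zzz 1 0 i" unfolding zzz_def using S.sym3b[OF p, of 0 1 i] i by simp
    have Gs: "\<And>m i j. m < 2 \<Longrightarrow> i < 2 \<Longrightarrow> j < 2 \<Longrightarrow> G m i j = G m j i"
      unfolding G_def using S.chr_sym by blast
    have r: "riemann t0 X n 0 1 i p = D 0 n 1 i - D 1 n 0 i + (\<Sum>m<2. G n 0 m * G m 1 i - G n 1 m * G m 0 i)" for n
      by (simp add: riemann_def D_def G_def)
    show "(\<Sum>n<2. z n * riemann t0 X n 0 1 i p) = z i * (ad 1 * z 0 - ad 0 * z 1)"
      unfolding r by (rule ricci_alg[OF i zzz1 Gs EH EA])
  qed
  define X2c where "X2c = (\<lambda>s::nat. if s = 0 then pd 0 (pd 0 X) p else if s = 1 then pd 0 (pd 1 X) p else pd 1 (pd 1 X) p)"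
  define X3c where "X3c = (\<lambda>s::nat. if s = 0 then pd 0 (pd 0 (pd 0 X)) p else if s = 1 then pd 0 (pd 0 (pd 1 X)) p
      else if s = 2 then pd 0 (pd 1 (pd 1 X)) p else pd 1 (pd 1 (pd 1 X)) p)"
  have X2can: "\<And>i j. i < 2 \<Longrightarrow> j < 2 \<Longrightarrow> pd i (pd j X) p = X2c (i + j)"
  proof -
    fix i j :: nat assume ij: "i < 2" "j < 2"
    have s: "pd 1 (pd 0 X) p = pd 0 (pd 1 X) p" using S.sym2[OF p, of 1 0] by simp
    show "pd i (pd j X) p = X2c (i + j)"
      using ij s by (auto simp: X2c_def less_Suc_eq numeral_2_eq_2)
  qed
  have X3can: "\<And>k i j. k < 2 \<Longrightarrow> i < 2 \<Longrightarrow> j < 2 \<Longrightarrow> pd k (pd i (pd j X)) p = X3c (k + i + j)"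
  proof -
    fix k i j :: nat assume kij: "k < 2" "i < 2" "j < 2"
    have a1: "pd 0 (pd 1 (pd 0 X)) p = pd 0 (pd 0 (pd 1 X)) p" using S.sym3a[OF p, of 0 1 0] by simp
    have a2: "pd 1 (pd 0 (pd 0 X)) p = pd 0 (pd 1 (pd 0 X)) p" using S.sym3b[OF p, of 1 0 0] by simp
    have a3: "pd 1 (pd 0 (pd 1 X)) p = pd 0 (pd 1 (pd 1 X)) p" using S.sym3b[OF p, of 1 0 1] by simp
    have a4: "pd 1 (pd 1 (pd 0 X)) p = pd 1 (pd 0 (pd 1 X)) p" using S.sym3a[OF p, of 1 1 0] by simp
    show "pd k (pd i (pd j X)) p = X3c (k + i + j)"
      using kij a1 a2 a3 a4 by (auto simp: X3c_def less_Suc_eq numeral_2_eq_2)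
  qed
  define RL where "RL = (\<lambda>n i. \<Sum>l<2. gm t0 X n l p * riemann t0 X l 0 1 i p)"
  have anti: "\<And>n i. n < 2 \<Longrightarrow> i < 2 \<Longrightarrow> RL n i = - RL i n"
  proof -
    fix n i :: nat assume ni: "n < 2" "i < 2"
    have r: "riemann t0 X l 0 1 i p = D 0 l 1 i - D 1 l 0 i + (\<Sum>m<2. G l 0 m * G m 1 i - G l 1 m * G m 0 i)" for l i
      by (simp add: riemann_def D_def G_def)
    have gis: "ginv t0 X 0 1 p = ginv t0 X 1 0 p" by (simp add: ginv_def gm10)
    have Pd: "\<And>i j l. i < 2 \<Longrightarrow> j < 2 \<Longrightarrow> mink t0 (pd i (pd j X) p) (pd l X p) = mink t0 (X2c (i + j)) (pd l X p)"
      using X2can by simp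
    have Qd: "\<And>i j k l. i < 2 \<Longrightarrow> j < 2 \<Longrightarrow> k < 2 \<Longrightarrow> l < 2 \<Longrightarrow>
       mink t0 (pd i (pd j X) p) (pd k (pd l X) p) = mink t0 (X2c (i + j)) (X2c (k + l))"
      using X2can by simp
    have qqs: "\<And>a b. mink t0 (X2c a) (X2c b) = mink t0 (X2c b) (X2c a)" by (rule mink_sym)
    have Td: "\<And>k i j n. k < 2 \<Longrightarrow> i < 2 \<Longrightarrow> j < 2 \<Longrightarrow>
       mink t0 (pd k (pd i (pd j X)) p) (pd n X p) = mink t0 (X3c (k + i + j)) (pd n X p)"
      using X3can by simp
    have Gd: "\<And>l i j. l < 2 \<Longrightarrow> i < 2 \<Longrightarrow> j < 2 \<Longrightarrow> G l i j = (\<Sum>m<2. ginv t0 X l m p * mink t0 (pd i (pd j X) p) (pd m X p))"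
      unfolding G_def using S.chrU[OF p] by blast
    have GG: "\<And>n i j. n < 2 \<Longrightarrow> i < 2 \<Longrightarrow> j < 2 \<Longrightarrow> (\<Sum>l<2. gm t0 X n l p * G l i j) = mink t0 (pd i (pd j X) p) (pd n X p)"
      unfolding G_def using S.GG[OF p] by blast
    have DG: "\<And>k n i j. k < 2 \<Longrightarrow> n < 2 \<Longrightarrow> i < 2 \<Longrightarrow> j < 2 \<Longrightarrow> (\<Sum>l<2. gm t0 X n l p * D k l i j)
       = mink t0 (pd k (pd i (pd j X)) p) (pd n X p) + mink t0 (pd i (pd j X) p) (pd k (pd n X) p)
         - (\<Sum>l<2. (mink t0 (pd k (pd n X) p) (pd l X p) + mink t0 (pd k (pd l X) p) (pd n X p)) * G l i j)"
    proof -
      fix k n i j :: nat assume h: "k < 2" "n < 2" "i < 2" "j < 2"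
      have pg: "\<And>l. l < 2 \<Longrightarrow> pd k (gm t0 X n l) p = mink t0 (pd k (pd n X) p) (pd l X p) + mink t0 (pd k (pd l X) p) (pd n X p)"
        using S.pd_gm[OF p h(1,2)] by (simp add: mink_sym[of t0 "pd n X p"])
      have "(\<Sum>l<2. pd k (gm t0 X n l) p * G l i j + gm t0 X n l p * D k l i j)
         = mink t0 (pd k (pd i (pd j X)) p) (pd n X p) + mink t0 (pd i (pd j X) p) (pd k (pd n X) p)"
        using S.DG[OF p h] unfolding G_def D_def .
      thus "(\<Sum>l<2. gm t0 X n l p * D k l i j)
       = mink t0 (pd k (pd i (pd j X)) p) (pd n X p) + mink t0 (pd i (pd j X) p) (pd k (pd n X) p)
         - (\<Sum>l<2. (mink t0 (pd k (pd n X) p) (pd l X p) + mink t0 (pd k (pd l X) p) (pd n X p)) * G l i j)"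
        by (simp add: sum2 pg algebra_simps)
    qed
    show "RL n i = - RL i n" unfolding RL_def r
      by (rule antisym_alg[where P="\<lambda>i j l. mink t0 (pd i (pd j X) p) (pd l X p)"
          and Q="\<lambda>i j k l. mink t0 (pd i (pd j X) p) (pd k (pd l X) p)"
          and T="\<lambda>k i j n. mink t0 (pd k (pd i (pd j X)) p) (pd n X p)"
          and pp="\<lambda>s l. mink t0 (X2c s) (pd l X p)" and qq="\<lambda>s t. mink t0 (X2c s) (X2c t)"
          and tt="\<lambda>s n. mink t0 (X3c s) (pd n X p)", OF gis Pd Qd qqs Td Gd GG DG ni])
  qed
  define c where "c = (\<lambda>l. tcoef t0 X Z l p)"
  have zc: "\<And>i. i < 2 \<Longrightarrow> (\<Sum>n<2. z n * riemann t0 X n 0 1 i p) = c 0 * RL 0 i + c 1 * RL 1 i"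
  proof -
    fix i :: nat assume i: "i < 2"
    have zn: "z n = c 0 * gm t0 X 0 n p + c 1 * gm t0 X 1 n p" if "n < 2" for n
      using S.cg[OF p that, of Z] unfolding z_def c_def by (simp add: sum2)
    show "(\<Sum>n<2. z n * riemann t0 X n 0 1 i p) = c 0 * RL 0 i + c 1 * RL 1 i"
      unfolding RL_def by (simp add: sum2 zn algebra_simps)
  qed
  define \<Phi> where "\<Phi> = ad 1 * z 0 - ad 0 * z 1"
  have h1: "c 0 * RL 0 1 = z 1 * \<Phi>"
    using ricci[of 1] zc[of 1] anti[of 1 1] unfolding \<Phi>_def by simp
  have h2: "- (c 1 * RL 0 1) = z 0 * \<Phi>"
    using ricci[of 0] zc[of 0] anti[of 0 0] anti[of 1 0] unfolding \<Phi>_def by simp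
  have dt: "gdet t0 X p = gm t0 X 0 0 p * gm t0 X 1 1 p - gm t0 X 0 1 p * gm t0 X 0 1 p"
    by (simp add: gdet_def gm10)
  have c0: "c 0 = (gm t0 X 1 1 p * z 0 - gm t0 X 0 1 p * z 1) / gdet t0 X p"
    unfolding c_def S.tcoefZ z_def using S.gd0[OF p] by (simp add: sum2 ginv_def field_simps)
  have c1: "c 1 = (gm t0 X 0 0 p * z 1 - gm t0 X 0 1 p * z 0) / gdet t0 X p"
    unfolding c_def S.tcoefZ z_def using S.gd0[OF p] by (simp add: sum2 ginv_def gm10 field_simps)
  have nul: "gm t0 X 1 1 p * z 0 * z 0 - 2 * gm t0 X 0 1 p * z 0 * z 1 + gm t0 X 0 0 p * z 1 * z 1 = 0"
    using M0[OF p] unfolding Mf_def z_def .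
  have znz: "z 0 \<noteq> 0 \<or> z 1 \<noteq> 0" unfolding z_def using S.z_nz null_dir p by blast
  have fin: "RL 0 1 / gdet t0 X p = c 0 * ad 0 + c 1 * ad 1"
    by (rule final_alg[OF dt S.gd0[OF p] c0 c1 h1[unfolded \<Phi>_def] h2[unfolded \<Phi>_def] nul znz])
  have gk: "gauss_curv t0 X p = RL 0 1 / gdet t0 X p"
    unfolding gauss_curv_def RL_def by (simp add: sum2 gm10 algebra_simps)
  show "gauss_curv t0 X p = dir_deriv (tcoef t0 X Z) a p"
    unfolding gk fin dir_deriv_def by (simp add: sum2 c_def ad_def)
qed


end
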